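(* Let $\{u_0^\nu\}_{\nu>0}\subset L^2(\mathbb{T}^2)$ be divergence-free vector fields such that the vorticities $\omega_0^\nu:=\operatorname{curl} u_0^\nu$ satisfy $\sup_{\nu>0}\|\omega_0^\nu\|_{\mathcal M(\mathbb{T}^2)}<\infty$. For each $\nu>0$ let $\omega^\nu$ be the (Leray) solution of the two-dimensional incompressible Navier--Stokes equations in vorticity form $$\partial_t\omega^\nu+u^\nu\cdot\nabla\omega^\nu=\nu\Delta\omega^\nu,\quad \operatorname{curl}u^\nu=\omega^\nu,\quad \omega^\nu(\cdot,0)=\omega_0^\nu$$ on $\mathbb{T}^2\times[0,\infty)$, and set $$\mathbb{M}_\omega(r):=\sup_{x\in\mathbb{T}^2,\ \nu>0,\ t>0}\int_{B_r(x)}|\omega^\nu(y,t)|\,dy,\qquad r>0.$$ (a) If there are $\alpha\in(0,2)$ and $C>0$ with $\mathbb{M}_\omega(r)\le C r^\alpha$ for all $r>0$, then there is a constant $C'>0$, independent of $\nu,t,T$, such that for all $\nu>0$ and all $t,T>0$ with $\nu t<1$ and $\nu T<1$, $$\|\omega^\nu(t)\|_{L^2}^2\le \frac{C'}{(\nu t)^{\frac{2-\alpha}{2}}}\qquad\text{and}\qquad \nu\int_0^T\|\omega^\nu(\tau)\|_{L^2}^2\,d\tau\le C'(\nu T)^{\frac{\alpha}{2}}.$$ (b) If there is $C>0$ with $\mathbb{M}_\omega(r)\le C|\log r|^{-1/2}$ for all $r\in(0,\tfrac12)$, then there is a constant $C'>0$, independent of $\nu,t$, such that $$\|\omega^\nu(t)\|_{L^2}^2\le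 \frac{C'}{\nu t\sqrt{|\log(\nu t)|}}$$ for all $\nu>0$ and all $t>0$ with $\nu t<1$. In particular, there is $C''>0$ such that for every $\delta>0$, $$\nu\int_\delta^T\|\omega^\nu(\tau)\|_{L^2}^2\,d\tau\le C''\,\frac{\log\frac{T}{\delta}}{\sqrt{|\log(\nu T)|}}$$ for all $\nu>0$ and all $T>\delta$ with $\nu T<1$, with $C''$ independent of $\nu,\delta,T$.
   Context: $\mathbb{T}^2$ is the two-dimensional flat torus and $\mathcal M(\mathbb{T}^2)$ the space of finite signed Borel measures with total variation norm. The velocity $u^\nu$ is the unique divergence-free field with $\operatorname{curl}u^\nu=\omega^\nu$ and spatial average equal to that of $u_0^\nu$. For such data the solutions exist globally, are unique and smooth for positive times. $B_r(x)$ denotes the ball of radius $r$ centered at $x$ in $\mathbb{T}^2$. *)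

theory Defs
  imports "HOL-Analysis.Analysis"
begin

text \<open>The torus T2 = R2 / Z2 (period 1). Space points are
  x :: real \<times> real, space-time points are (x, t) :: (real \<times> real) \<times> real.
  Functions on the torus are 1-periodic functions on R2; integrals over
  the torus are integrals over the fundamental cell Q = [0,1]2.\<close>

definition dd :: "'a::real_normed_vector \<Rightarrow> ('a \<Rightarrow> real) \<Rightarrow> 'a \<Rightarrow> real" where
  "dd v f p = deriv (\<lambda>s. f (p + s *\<^sub>R v)) 0"

fun dds :: "'a::real_normed_vector list \<Rightarrow> ('a \<Rightarrow> real) \<Rightarrow> 'a \<Rightarrow> real" where
  "dds [] f = f"
| "dds (v # vs) f = dd v (dds vs f)"

definition smooth_on :: "'a::euclidean_space set \<Rightarrow> ('a \<Rightarrow> real) \<Rightarrow> bool" where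
  "smooth_on S f \<longleftrightarrow>
     (\<forall>vs. set vs \<subseteq> Basis \<longrightarrow>
        continuous_on S (dds vs f) \<and>
        (\<forall>v\<in>Basis. \<forall>p\<in>S. (\<lambda>s::real. dds vs f (p + s *\<^sub>R v)) differentiable (at 0)))"

definition periodic2 :: "(real \<times> real \<Rightarrow> 'b) \<Rightarrow> bool" where
  "periodic2 f \<longleftrightarrow> (\<forall>x. f (x + (1, 0)) = f x \<and> f (x + (0, 1)) = f x)"

definition cellQ :: "(real \<times> real) set" where
  "cellQ = cbox (0, 0) (1, 1)"

definition tdist :: "real \<times> real \<Rightarrow> real \<times> real \<Rightarrow> real" where
  "tdist x y = Inf {dist x (y + (real_of_int a, real_of_int b)) | a b. True}"

definition tball :: "real \<times> real \<Rightarrow> real \<Rightarrow> (real \<times> real) set" where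
  "tball x r = {y \<in> cellQ. tdist x y < r}"

definition test_fun :: "(real \<times> real \<Rightarrow> real) \<Rightarrow> bool" where
  "test_fun \<phi> \<longleftrightarrow> smooth_on UNIV \<phi> \<and> periodic2 \<phi>"

definition L2_divfree :: "(real \<times> real \<Rightarrow> real \<times> real) \<Rightarrow> bool" where
  "L2_divfree u0 \<longleftrightarrow>
     u0 \<in> borel_measurable borel \<and> periodic2 u0 \<and>
     (\<integral>\<^sup>+ x\<in>cellQ. ennreal ((norm (u0 x))\<^sup>2) \<partial>lborel) < \<infinity> \<and>
     (\<forall>\<phi>. test_fun \<phi> \<longrightarrow>
        (LINT x:cellQ|lborel. fst (u0 x) * dd (1,0) \<phi> x + snd (u0 x) * dd (0,1) \<phi> x) = 0)"

text \<open>Action of the distributional vorticity curl u0 = d1 u02 - d2 u01 on a test function.\<close>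
definition curl_pair :: "(real \<times> real \<Rightarrow> real \<times> real) \<Rightarrow> (real \<times> real \<Rightarrow> real) \<Rightarrow> real" where
  "curl_pair u0 \<phi> =
     (LINT x:cellQ|lborel. fst (u0 x) * dd (0,1) \<phi> x - snd (u0 x) * dd (1,0) \<phi> x)"

text \<open>curl u0 is a finite measure with total variation norm at most K
  (dual characterisation of the total variation norm).\<close>
definition vort_TV_le :: "(real \<times> real \<Rightarrow> real \<times> real) \<Rightarrow> real \<Rightarrow> bool" where
  "vort_TV_le u0 K \<longleftrightarrow>
     (\<forall>\<phi>. test_fun \<phi> \<and> (\<forall>x. \<bar>\<phi> x\<bar> \<le> 1) \<longrightarrow> \<bar>curl_pair u0 \<phi>\<bar> \<le> K)"

text \<open>The (unique, smooth for t > 0) solution of 2D Navier-Stokes in vorticity form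
  with viscosity nu and initial velocity u0: u is the velocity, om = curl u the
  vorticity; u has the spatial mean of u0 and u(t) tends to u0 in L2 as t tends to 0.\<close>
definition NS_sol :: "real \<Rightarrow> (real \<times> real \<Rightarrow> real \<times> real)
     \<Rightarrow> ((real \<times> real) \<times> real \<Rightarrow> real \<times> real) \<Rightarrow> ((real \<times> real) \<times> real \<Rightarrow> real) \<Rightarrow> bool" where
  "NS_sol \<nu> u0 u om \<longleftrightarrow>
     (let D = {p. snd p > 0}; u1 = (\<lambda>p. fst (u p)); u2 = (\<lambda>p. snd (u p));
          e1 = ((1, 0), 0) :: (real \<times> real) \<times> real;
          e2 = ((0, 1), 0) :: (real \<times> real) \<times> real;
          et = ((0, 0), 1) :: (real \<times> real) \<times> real
      in smooth_on D u1 \<and> smooth_on D u2 \<and> smooth_on D om \<and>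
         (\<forall>t. periodic2 (\<lambda>x. u (x, t)) \<and> periodic2 (\<lambda>x. om (x, t))) \<and>
         (\<forall>p\<in>D. om p = dd e1 u2 p - dd e2 u1 p \<and>
                 dd e1 u1 p + dd e2 u2 p = 0 \<and>
                 dd et om p + u1 p * dd e1 om p + u2 p * dd e2 om p
                   = \<nu> * (dd e1 (dd e1 om) p + dd e2 (dd e2 om) p)) \<and>
         (\<forall>t>0. (LINT x:cellQ|lborel. u (x, t)) = (LINT x:cellQ|lborel. u0 x)) \<and>
         ((\<lambda>t. \<integral>\<^sup>+ x\<in>cellQ. ennreal ((norm (u (x, t) - u0 x))\<^sup>2) \<partial>lborel)
            \<longlongrightarrow> 0) (at_right 0))"

definition L2sq :: "((real \<times> real) \<times> real \<Rightarrow> real) \<Rightarrow> real \<Rightarrow> ennreal" where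
  "L2sq om t = (\<integral>\<^sup>+ y\<in>cellQ. ennreal ((om (y, t))\<^sup>2) \<partial>lborel)"

definition ball_mass :: "((real \<times> real) \<times> real \<Rightarrow> real) \<Rightarrow> real \<Rightarrow> real \<times> real \<Rightarrow> real \<Rightarrow> ennreal" where
  "ball_mass om t x r = (\<integral>\<^sup>+ y\<in>tball x r. ennreal \<bar>om (y, t)\<bar> \<partial>lborel)"

end

theory Submission
  imports Defs
begin

lemma cint: "continuous_on {a..b} f \<Longrightarrow> (f::real\<Rightarrow>real) integrable_on {a..b}"
  by (simp add: integrable_continuous_interval)

lemma hic: "a \<le> b \<Longrightarrow> ((\<lambda>x. c) has_integral c * (b - a)) {a..(b::real)}"
  using has_integral_const_real[of c a b] by (simp add: mult.commute)

lemma cs1: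
  fixes \<phi> :: "real \<Rightarrow> real"
  assumes ab: "a \<le> b" and c: "continuous_on {a..b} \<phi>"
  shows "(integral {a..b} \<phi>)\<^sup>2 \<le> (b - a) * integral {a..b} (\<lambda>x. (\<phi> x)\<^sup>2)"
proof (cases "a = b")
  case True thus ?thesis by simp
next
  case False
  hence ba: "b - a > 0" using ab by simp
  define A where "A = integral {a..b} \<phi> / (b - a)"
  have i1: "\<phi> integrable_on {a..b}" using c by (rule cint)
  have c2: "continuous_on {a..b} (\<lambda>x. (\<phi> x)\<^sup>2)" by (intro continuous_intros c)
  have i2: "(\<lambda>x. (\<phi> x)\<^sup>2) integrable_on {a..b}" using c2 by (rule cint)
  have "0 \<le> integral {a..b} (\<lambda>x. (\<phi> x - A)\<^sup>2)"
    by (rule integral_nonneg) (auto intro!: cint continuous_intros c)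
  also have "integral {a..b} (\<lambda>x. (\<phi> x - A)\<^sup>2) = integral {a..b} (\<lambda>x. (\<phi> x)\<^sup>2 - 2 * A * \<phi> x + A\<^sup>2)"
    by (rule integral_cong) (simp add: power2_eq_square algebra_simps)
  also have "\<dots> = integral {a..b} (\<lambda>x. (\<phi> x)\<^sup>2) - 2 * A * integral {a..b} \<phi> + A\<^sup>2 * (b - a)"
  proof (rule integral_unique)
    show "((\<lambda>x. (\<phi> x)\<^sup>2 - 2 * A * \<phi> x + A\<^sup>2) has_integral
      integral {a..b} (\<lambda>x. (\<phi> x)\<^sup>2) - 2 * A * integral {a..b} \<phi> + A\<^sup>2 * (b - a)) {a..b}"
      using ab by (intro has_integral_add has_integral_diff has_integral_mult_right integrable_integral i1 i2)
        (rule hic)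
  qed
  also have "\<dots> = integral {a..b} (\<lambda>x. (\<phi> x)\<^sup>2) - (integral {a..b} \<phi>)\<^sup>2 / (b - a)"
  proof -
    have "\<And>I d J::real. d > 0 \<Longrightarrow> J - 2 * (I/d) * I + (I/d)\<^sup>2 * d = J - I\<^sup>2 / d"
      by (simp add: field_simps power2_eq_square)
    thus ?thesis using ba unfolding A_def by blast
  qed
  finally show ?thesis using ba by (simp add: field_simps)
qed

lemma ftc_sub:
  fixes g g' :: "real \<Rightarrow> real"
  assumes d: "\<And>x. x \<in> {a..b} \<Longrightarrow> (g has_real_derivative g' x) (at x)"
    and "a \<le> u" "u \<le> s" "s \<le> b"
  shows "(g' has_integral (g s - g u)) {u..s}"
proof (rule fundamental_theorem_of_calculus)
  show "u \<le> s" by fact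
  fix x assume "x \<in> {u..s}"
  hence "x \<in> {a..b}" using assms by auto
  thus "(g has_vector_derivative g' x) (at x within {u..s})"
    using d by (auto simp: has_real_derivative_iff_has_vector_derivative intro: has_vector_derivative_at_within)
qed

lemma poinc1:
  fixes g g' :: "real \<Rightarrow> real"
  assumes ab: "a \<le> b" and cg': "continuous_on {a..b} g'"
    and d: "\<And>x. x \<in> {a..b} \<Longrightarrow> (g has_real_derivative g' x) (at x)"
  shows "integral {a..b} (\<lambda>x. (g x - integral {a..b} g / (b - a))\<^sup>2)
           \<le> (b - a)\<^sup>2 * integral {a..b} (\<lambda>x. (g' x)\<^sup>2)"
proof (cases "a = b")
  case True thus ?thesis by simp
next
  case False
  hence ba: "b - a > 0" using ab by simp
  have cg: "continuous_on {a..b} g"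
    using d by (meson DERIV_isCont continuous_at_imp_continuous_on)
  define V where "V = integral {a..b} (\<lambda>x. \<bar>g' x\<bar>)"
  define m where "m = integral {a..b} g / (b - a)"
  have ia: "(\<lambda>x. \<bar>g' x\<bar>) integrable_on {c..e}" if "a \<le> c" "e \<le> b" for c e
    using that by (intro cint continuous_intros continuous_on_subset[OF cg']) auto
  have key: "\<bar>g s - g u\<bar> \<le> V" if "u \<in> {a..b}" "s \<in> {a..b}" "u \<le> s" for u s
  proof -
    have hi: "(g' has_integral (g s - g u)) {u..s}" using ftc_sub[OF d] that by auto
    have "\<bar>g s - g u\<bar> = norm (integral {u..s} g')" using hi by (simp add: integral_unique)
    also have "\<dots> \<le> integral {u..s} (\<lambda>x. \<bar>g' x\<bar>)"
      by (rule Henstock_Kurzweil_Integration.integral_norm_bound_integral)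
        (use hi ia that in auto)
    also have "\<dots> \<le> V" unfolding V_def
      by (rule integral_subset_le) (use ia that in auto)
    finally show ?thesis .
  qed
  have key2: "\<bar>g s - g u\<bar> \<le> V" if "u \<in> {a..b}" "s \<in> {a..b}" for u s
    using key[of u s] key[of s u] that by (cases "u \<le> s") auto
  have ig: "g integrable_on {a..b}" using cg by (rule cint)
  have mb: "\<bar>g s - m\<bar> \<le> V" if s: "s \<in> {a..b}" for s
  proof -
    have "integral {a..b} (\<lambda>x. g s - V) \<le> integral {a..b} g"
      by (rule integral_le) (use ig key2[OF _ s] in \<open>force+\<close>)
    hence l: "(b - a) * (g s - V) \<le> integral {a..b} g" using ab by simp
    have "integral {a..b} g \<le> integral {a..b} (\<lambda>x. g s + V)"
      by (rule integral_le) (use ig key2[OF _ s] in \<open>force+\<close>)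
    hence u: "integral {a..b} g \<le> (b - a) * (g s + V)" using ab by simp
    have "g s - V \<le> m" using l ba unfolding m_def by (simp add: field_simps)
    moreover have "m \<le> g s + V" using u ba unfolding m_def by (simp add: field_simps)
    ultimately show ?thesis by auto
  qed
  have "integral {a..b} (\<lambda>x. (g x - m)\<^sup>2) \<le> integral {a..b} (\<lambda>x. V\<^sup>2)"
  proof (rule integral_le)
    show "(\<lambda>x. (g x - m)\<^sup>2) integrable_on {a..b}" by (intro cint continuous_intros cg)
    fix x assume "x \<in> {a..b}"
    from power_mono[OF mb[OF this] abs_ge_zero, of 2] show "(g x - m)\<^sup>2 \<le> V\<^sup>2"
      by simp
  qed (intro cint continuous_intros)
  also have "\<dots> = (b - a) * V\<^sup>2" using ab by simp
  also have "\<dots> \<le> (b - a) * ((b - a) * integral {a..b} (\<lambda>x. (\<bar>g' x\<bar>)\<^sup>2))"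
    using cs1[OF ab, of "\<lambda>x. \<bar>g' x\<bar>"] ba unfolding V_def
    by (intro mult_left_mono) (auto intro: continuous_intros cg')
  finally show ?thesis unfolding m_def by (simp add: power2_eq_square mult.assoc)
qed

lemma cintU: "continuous_on UNIV (g::'a::euclidean_space \<Rightarrow> real) \<Longrightarrow> g integrable_on cbox a b"
  by (rule integrable_continuous) (rule continuous_on_subset, auto)

lemma fub1:
  fixes f :: "real \<times> real \<Rightarrow> real"
  assumes "continuous_on UNIV f"
  shows "integral (cbox (a,c) (b,d)) f = integral {a..b} (\<lambda>x. integral {c..d} (\<lambda>y. f (x,y)))"
  using integral_prod_continuous[of a c b d f] assms continuous_on_subset by fastforce

lemma int2dim:
  fixes f :: "real \<times> real \<Rightarrow> real"
  assumes "continuous_on UNIV f"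
  shows "(\<lambda>x. integral {c..d} (\<lambda>y. f (x,y))) integrable_on {a..b}"
  using integral_integrable_2dim[of a c b d f] assms continuous_on_subset by fastforce

lemma slice_cont1:
  fixes f :: "real \<times> real \<Rightarrow> real"
  assumes "continuous_on UNIV f"
  shows "continuous_on UNIV (\<lambda>y. f (x, y))" "continuous_on UNIV (\<lambda>y. f (y, x))"
  by (auto intro!: continuous_on_compose2[OF assms] continuous_intros)

lemma sq_split: "((p::real) - q)\<^sup>2 \<le> 2 * (p - w)\<^sup>2 + 2 * (w - q)\<^sup>2"
proof -
  have "2 * (p - w)\<^sup>2 + 2 * (w - q)\<^sup>2 - (p - q)\<^sup>2 = (p - 2 * w + q)\<^sup>2"
    by (simp add: power2_eq_square algebra_simps)
  thus ?thesis using zero_le_power2[of "p - 2 * w + q"] by linarith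
qed

lemma int_lin2:
  fixes F G :: "'a::euclidean_space \<Rightarrow> real"
  assumes "F integrable_on S" "G integrable_on S"
  shows "integral S (\<lambda>x. c1 * F x + c2 * G x) = c1 * integral S F + c2 * integral S G"
  using assms by (simp add: integral_add integrable_on_mult_right)

lemma cont_param:
  fixes f :: "real \<times> real \<Rightarrow> real"
  assumes "continuous_on UNIV f"
  shows "continuous_on UNIV (\<lambda>x. integral {c..d} (\<lambda>y. f (x,y)))"
  using integral_continuous_on_param[of UNIV c d "\<lambda>x y. f (x,y)"] continuous_on_subset[OF assms]
  by (simp add: case_prod_unfold)

lemma deriv_h:
  fixes f f1 :: "real \<times> real \<Rightarrow> real"
  assumes cf: "continuous_on UNIV f" and cf1: "continuous_on UNIV f1"
    and d1: "\<And>x1 x2. ((\<lambda>s. f (s,x2)) has_real_derivative f1 (x1,x2)) (at x1)"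
  shows "((\<lambda>x. integral {c..d} (\<lambda>y. f (x,y))) has_real_derivative integral {c..d} (\<lambda>y. f1 (x,y))) (at x)"
proof -
  have "((\<lambda>x. integral (cbox c d) (\<lambda>y. f (x,y))) has_field_derivative integral (cbox c d) (\<lambda>y. f1 (x,y))) (at x within UNIV)"
  proof (rule leibniz_rule_field_derivative[where fx="\<lambda>x y. f1 (x,y)"])
    show "\<And>x t. x \<in> UNIV \<Longrightarrow> t \<in> cbox c d \<Longrightarrow> ((\<lambda>x. f (x, t)) has_field_derivative f1 (x, t)) (at x within UNIV)"
      using d1 by simp
    show "\<And>x. x \<in> UNIV \<Longrightarrow> (\<lambda>y. f (x,y)) integrable_on cbox c d"
      using slice_cont1(1)[OF cf] cintU by blast
    show "continuous_on (UNIV \<times> cbox c d) (\<lambda>(x, t). f1 (x, t))"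
      using continuous_on_subset[OF cf1] by (simp add: case_prod_unfold)
  qed auto
  thus ?thesis by simp
qed

lemma poinc2:
  fixes f f1 f2 :: "real \<times> real \<Rightarrow> real"
  assumes cf: "continuous_on UNIV f" and cf1: "continuous_on UNIV f1" and cf2: "continuous_on UNIV f2"
    and d1: "\<And>x1 x2. ((\<lambda>s. f (s,x2)) has_real_derivative f1 (x1,x2)) (at x1)"
    and d2: "\<And>x1 x2. ((\<lambda>s. f (x1,s)) has_real_derivative f2 (x1,x2)) (at x2)"
    and r: "r > 0"
  shows "integral (cbox (a,b) (a+r,b+r)) (\<lambda>x. (f x - integral (cbox (a,b) (a+r,b+r)) f / r\<^sup>2)\<^sup>2)
    \<le> 2 * r\<^sup>2 * (integral (cbox (a,b) (a+r,b+r)) (\<lambda>x. (f1 x)\<^sup>2) + integral (cbox (a,b) (a+r,b+r)) (\<lambda>x. (f2 x)\<^sup>2))"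
proof -
  define S where "S = cbox (a,b) (a+r,b+r)"
  define h where "h = (\<lambda>x1. integral {b..b+r} (\<lambda>y. f (x1,y)) / r)"
  define h' where "h' = (\<lambda>x1. integral {b..b+r} (\<lambda>y. f1 (x1,y)) / r)"
  define m where "m = integral S f / r\<^sup>2"
  have dh: "(h has_real_derivative h' x) (at x)" for x
    unfolding h_def h'_def by (intro DERIV_cdivide deriv_h cf cf1 d1)
  have ch: "continuous_on UNIV h"
    using dh by (meson DERIV_isCont continuous_at_imp_continuous_on)
  have ch': "continuous_on UNIV h'"
    unfolding h'_def using r by (intro continuous_intros cont_param cf1) auto
  have m_eq: "m = integral {a..a+r} h / r"
  proof -
    have "integral S f = integral {a..a+r} (\<lambda>x. integral {b..b+r} (\<lambda>y. f (x,y)))"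
      unfolding S_def by (rule fub1[OF cf])
    also have "\<dots> = integral {a..a+r} (\<lambda>x. r * h x)"
      unfolding h_def using r by simp
    also have "\<dots> = r * integral {a..a+r} h" by simp
    finally show ?thesis unfolding m_def using r by (simp add: power2_eq_square)
  qed
  have c_a: "continuous_on UNIV (\<lambda>x. (f x - h (fst x))\<^sup>2)"
    by (intro continuous_intros cf continuous_on_compose2[OF ch]) auto
  have T1: "integral S (\<lambda>x. (f x - h (fst x))\<^sup>2) \<le> r\<^sup>2 * integral S (\<lambda>x. (f2 x)\<^sup>2)"
  proof -
    have "integral S (\<lambda>x. (f x - h (fst x))\<^sup>2) = integral {a..a+r} (\<lambda>x. integral {b..b+r} (\<lambda>y. (f (x,y) - h x)\<^sup>2))"
      unfolding S_def using fub1[OF c_a] by simp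
    also have "\<dots> \<le> integral {a..a+r} (\<lambda>x. r\<^sup>2 * integral {b..b+r} (\<lambda>y. (f2 (x,y))\<^sup>2))"
    proof (rule integral_le)
      show "(\<lambda>x. integral {b..b+r} (\<lambda>y. (f (x,y) - h x)\<^sup>2)) integrable_on {a..a+r}"
        using int2dim[OF c_a] by simp
      show "(\<lambda>x. r\<^sup>2 * integral {b..b+r} (\<lambda>y. (f2 (x,y))\<^sup>2)) integrable_on {a..a+r}"
        by (intro integrable_on_mult_right int2dim continuous_intros cf2)
      fix x assume "x \<in> {a..a+r}"
      have "integral {b..b+r} (\<lambda>y. (f (x,y) - integral {b..b+r} (\<lambda>y. f (x,y)) / (b + r - b))\<^sup>2)
           \<le> (b + r - b)\<^sup>2 * integral {b..b+r} (\<lambda>y. (f2 (x,y))\<^sup>2)"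
        using r by (intro poinc1 continuous_on_subset[OF slice_cont1(1)[OF cf2]] d2) auto
      thus "integral {b..b+r} (\<lambda>y. (f (x,y) - h x)\<^sup>2) \<le> r\<^sup>2 * integral {b..b+r} (\<lambda>y. (f2 (x,y))\<^sup>2)"
        unfolding h_def by simp
    qed
    also have "\<dots> = r\<^sup>2 * integral S (\<lambda>x. (f2 x)\<^sup>2)"
      unfolding S_def by (subst fub1) (auto intro: continuous_intros cf2)
    finally show ?thesis .
  qed
  have c_b: "continuous_on UNIV (\<lambda>x. (h (fst x) - m)\<^sup>2)"
    by (intro continuous_intros continuous_on_compose2[OF ch]) auto
  have T2: "integral S (\<lambda>x. (h (fst x) - m)\<^sup>2) \<le> r\<^sup>2 * integral S (\<lambda>x. (f1 x)\<^sup>2)"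
  proof -
    have "integral S (\<lambda>x. (h (fst x) - m)\<^sup>2) = integral {a..a+r} (\<lambda>x. integral {b..b+r} (\<lambda>y. (h x - m)\<^sup>2))"
      unfolding S_def using fub1[OF c_b] by simp
    also have "\<dots> = r * integral {a..a+r} (\<lambda>x. (h x - m)\<^sup>2)"
      using r by simp
    also have "\<dots> \<le> r * (r\<^sup>2 * integral {a..a+r} (\<lambda>x. (h' x)\<^sup>2))"
    proof -
      have "integral {a..a+r} (\<lambda>x. (h x - integral {a..a+r} h / (a + r - a))\<^sup>2)
           \<le> (a + r - a)\<^sup>2 * integral {a..a+r} (\<lambda>x. (h' x)\<^sup>2)"
        using r by (intro poinc1 continuous_on_subset[OF ch'] dh) auto
      thus ?thesis using r unfolding m_eq by (intro mult_left_mono) auto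
    qed
    also have "\<dots> \<le> r * (r\<^sup>2 * integral {a..a+r} (\<lambda>x. integral {b..b+r} (\<lambda>y. (f1 (x,y))\<^sup>2) / r))"
    proof -
      have "integral {a..a+r} (\<lambda>x. (h' x)\<^sup>2) \<le> integral {a..a+r} (\<lambda>x. integral {b..b+r} (\<lambda>y. (f1 (x,y))\<^sup>2) / r)"
      proof (rule integral_le)
        show "(\<lambda>x. (h' x)\<^sup>2) integrable_on {a..a+r}"
          by (intro cint continuous_intros continuous_on_subset[OF ch']) auto
        show "(\<lambda>x. integral {b..b+r} (\<lambda>y. (f1 (x,y))\<^sup>2) / r) integrable_on {a..a+r}"
          by (intro integrable_on_mult_left[where c="1/r", simplified] int2dim continuous_intros cf1)
        fix x assume "x \<in> {a..a+r}"
        have "(integral {b..b+r} (\<lambda>y. f1 (x,y)))\<^sup>2 \<le> (b + r - b) * integral {b..b+r} (\<lambda>y. (f1 (x,y))\<^sup>2)"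
          using r by (intro cs1 continuous_on_subset[OF slice_cont1(1)[OF cf1]]) auto
        hence "(integral {b..b+r} (\<lambda>y. f1 (x,y)))\<^sup>2 / r\<^sup>2 \<le> r * integral {b..b+r} (\<lambda>y. (f1 (x,y))\<^sup>2) / r\<^sup>2"
          using r by (intro divide_right_mono) auto
        thus "(h' x)\<^sup>2 \<le> integral {b..b+r} (\<lambda>y. (f1 (x,y))\<^sup>2) / r"
          unfolding h'_def using r by (simp add: power_divide power2_eq_square)
      qed
      thus ?thesis using r by (intro mult_left_mono) auto
    qed
    also have "\<dots> = r\<^sup>2 * integral S (\<lambda>x. (f1 x)\<^sup>2)"
    proof -
      have "integral S (\<lambda>x. (f1 x)\<^sup>2) = integral {a..a+r} (\<lambda>x. integral {b..b+r} (\<lambda>y. (f1 (x,y))\<^sup>2))"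
        unfolding S_def by (subst fub1) (auto intro: continuous_intros cf1)
      thus ?thesis using r by (simp add: power2_eq_square)
    qed
    finally show ?thesis .
  qed
  have "integral S (\<lambda>x. (f x - m)\<^sup>2) \<le> integral S (\<lambda>x. 2 * (f x - h (fst x))\<^sup>2 + 2 * (h (fst x) - m)\<^sup>2)"
  proof (rule integral_le)
    show "(\<lambda>x. (f x - m)\<^sup>2) integrable_on S" unfolding S_def by (intro cintU continuous_intros cf)
    show "(\<lambda>x. 2 * (f x - h (fst x))\<^sup>2 + 2 * (h (fst x) - m)\<^sup>2) integrable_on S"
      unfolding S_def by (intro cintU continuous_intros c_a c_b)
    fix x
    show "(f x - m)\<^sup>2 \<le> 2 * (f x - h (fst x))\<^sup>2 + 2 * (h (fst x) - m)\<^sup>2"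
      by (rule sq_split)
  qed
  also have "\<dots> = 2 * integral S (\<lambda>x. (f x - h (fst x))\<^sup>2) + 2 * integral S (\<lambda>x. (h (fst x) - m)\<^sup>2)"
    using cintU[OF c_a] cintU[OF c_b] unfolding S_def by (rule int_lin2)
  also have "\<dots> \<le> 2 * (r\<^sup>2 * integral S (\<lambda>x. (f2 x)\<^sup>2)) + 2 * (r\<^sup>2 * integral S (\<lambda>x. (f1 x)\<^sup>2))"
    using T1 T2 by linarith
  finally show ?thesis unfolding S_def m_def by (simp add: algebra_simps)
qed

lemma cell_ineq:
  fixes f f1 f2 :: "real \<times> real \<Rightarrow> real"
  assumes cf: "continuous_on UNIV f" and cf1: "continuous_on UNIV f1" and cf2: "continuous_on UNIV f2"
    and d1: "\<And>x1 x2. ((\<lambda>s. f (s,x2)) has_real_derivative f1 (x1,x2)) (at x1)"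
    and d2: "\<And>x1 x2. ((\<lambda>s. f (x1,s)) has_real_derivative f2 (x1,x2)) (at x2)"
    and r: "r > 0"
  shows "integral (cbox (a,b) (a+r,b+r)) (\<lambda>x. (f x)\<^sup>2)
    \<le> (integral (cbox (a,b) (a+r,b+r)) (\<lambda>x. \<bar>f x\<bar>))\<^sup>2 / r\<^sup>2
       + 2 * r\<^sup>2 * (integral (cbox (a,b) (a+r,b+r)) (\<lambda>x. (f1 x)\<^sup>2) + integral (cbox (a,b) (a+r,b+r)) (\<lambda>x. (f2 x)\<^sup>2))"
proof -
  define S where "S = cbox (a,b) (a+r,b+r)"
  define I where "I = integral S f"
  define m where "m = I / r\<^sup>2"
  have cS: "Henstock_Kurzweil_Integration.content S = r\<^sup>2" unfolding S_def using r by (simp add: content_Pair power2_eq_square)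
  have if1: "f integrable_on S" unfolding S_def by (rule cintU[OF cf])
  have if2: "(\<lambda>x. (f x)\<^sup>2) integrable_on S" unfolding S_def by (intro cintU continuous_intros cf)
  have "integral S (\<lambda>x. (f x - m)\<^sup>2) = integral S (\<lambda>x. (f x)\<^sup>2 - 2 * m * f x + m\<^sup>2)"
    by (rule integral_cong) (simp add: power2_eq_square algebra_simps)
  also have "\<dots> = integral S (\<lambda>x. (f x)\<^sup>2) - 2 * m * I + m\<^sup>2 * r\<^sup>2"
  proof (rule integral_unique)
    have "((\<lambda>x. m\<^sup>2) has_integral Henstock_Kurzweil_Integration.content S *\<^sub>R m\<^sup>2) S" unfolding S_def by (rule has_integral_const)
    hence c: "((\<lambda>x. m\<^sup>2) has_integral m\<^sup>2 * r\<^sup>2) S" using cS by (simp add: mult.commute)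
    show "((\<lambda>x. (f x)\<^sup>2 - 2 * m * f x + m\<^sup>2) has_integral integral S (\<lambda>x. (f x)\<^sup>2) - 2 * m * I + m\<^sup>2 * r\<^sup>2) S"
      unfolding I_def by (intro has_integral_add has_integral_diff has_integral_mult_right integrable_integral if1 if2 c)
  qed
  also have "\<dots> = integral S (\<lambda>x. (f x)\<^sup>2) - I\<^sup>2 / r\<^sup>2"
  proof -
    have "\<And>J::real. J - 2 * (I / r\<^sup>2) * I + (I / r\<^sup>2)\<^sup>2 * r\<^sup>2 = J - I\<^sup>2 / r\<^sup>2"
      using r by (simp add: field_simps power2_eq_square)
    thus ?thesis unfolding m_def by blast
  qed
  finally have eq: "integral S (\<lambda>x. (f x)\<^sup>2) = integral S (\<lambda>x. (f x - m)\<^sup>2) + I\<^sup>2 / r\<^sup>2" by simp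
  have "\<bar>I\<bar> \<le> integral S (\<lambda>x. \<bar>f x\<bar>)" unfolding I_def S_def
    using Henstock_Kurzweil_Integration.integral_norm_bound_integral[OF cintU[OF cf] cintU[of "\<lambda>x. \<bar>f x\<bar>"], of "(a,b)" "(a+r,b+r)"]
    by (auto intro: continuous_intros cf)
  hence "I\<^sup>2 \<le> (integral S (\<lambda>x. \<bar>f x\<bar>))\<^sup>2"
    by (metis abs_ge_zero abs_le_square_iff abs_of_nonneg order_trans)
  hence "I\<^sup>2 / r\<^sup>2 \<le> (integral S (\<lambda>x. \<bar>f x\<bar>))\<^sup>2 / r\<^sup>2" by (intro divide_right_mono) auto
  moreover have "integral S (\<lambda>x. (f x - m)\<^sup>2)
    \<le> 2 * r\<^sup>2 * (integral S (\<lambda>x. (f1 x)\<^sup>2) + integral S (\<lambda>x. (f2 x)\<^sup>2))"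
    using poinc2[OF cf cf1 cf2 d1 d2 r, of a b] unfolding S_def m_def I_def by simp
  ultimately show ?thesis using eq unfolding S_def by linarith
qed

lemma split1:
  fixes h :: "real \<Rightarrow> real"
  assumes "h integrable_on {0..1}" and n: "n > 0"
  shows "integral {0..1} h = (\<Sum>k<n. integral {real k / n..real (Suc k) / n} h)"
proof -
  have "m \<le> n \<Longrightarrow> integral {0..real m / n} h = (\<Sum>k<m. integral {real k / n..real (Suc k) / n} h)" for m
  proof (induction m)
    case 0 thus ?case by simp
  next
    case (Suc m)
    have "integral {0..real m / n} h + integral {real m / n..real (Suc m) / n} h = integral {0..real (Suc m) / n} h"
    proof (rule Henstock_Kurzweil_Integration.integral_combine)
      show "0 \<le> real m / n" by simp
      show "real m / n \<le> real (Suc m) / n" using n by (simp add: divide_right_mono)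
      show "h integrable_on {0..real (Suc m) / n}"
        by (rule integrable_on_subinterval[OF assms(1)]) (use Suc.prems n in \<open>auto simp: field_simps\<close>)
    qed
    thus ?case using Suc by simp
  qed
  from this[of n] n show ?thesis by simp
qed

definition cell :: "nat \<Rightarrow> nat \<Rightarrow> nat \<Rightarrow> (real \<times> real) set" where
  "cell n i j = cbox (real i / n, real j / n) (real (Suc i) / n, real (Suc j) / n)"

lemma grid_sum:
  fixes g :: "real \<times> real \<Rightarrow> real"
  assumes cg: "continuous_on UNIV g" and n: "n > 0"
  shows "integral (cbox (0,0) (1,1)) g = (\<Sum>i<n. \<Sum>j<n. integral (cell n i j) g)"
proof -
  have "integral (cbox (0,0) (1,1)) g = integral {0..1} (\<lambda>x. integral {0..1} (\<lambda>y. g (x,y)))"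
    by (rule fub1[OF cg])
  also have "\<dots> = integral {0..1} (\<lambda>x. \<Sum>j<n. integral {real j / n..real (Suc j) / n} (\<lambda>y. g (x,y)))"
    by (intro integral_cong split1 n cint continuous_on_subset[OF slice_cont1(1)[OF cg]]) auto
  also have "\<dots> = (\<Sum>j<n. integral {0..1} (\<lambda>x. integral {real j / n..real (Suc j) / n} (\<lambda>y. g (x,y))))"
    by (intro integral_sum int2dim cg) auto
  also have "\<dots> = (\<Sum>j<n. \<Sum>i<n. integral {real i / n..real (Suc i) / n} (\<lambda>x. integral {real j / n..real (Suc j) / n} (\<lambda>y. g (x,y))))"
    by (intro sum.cong refl split1 n int2dim cg)
  also have "\<dots> = (\<Sum>j<n. \<Sum>i<n. integral (cell n i j) g)"
    unfolding cell_def by (intro sum.cong refl fub1[symmetric] cg)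
  also have "\<dots> = (\<Sum>i<n. \<Sum>j<n. integral (cell n i j) g)"
    by (rule sum.swap)
  finally show ?thesis .
qed

lemma grid_ineq:
  fixes f f1 f2 :: "real \<times> real \<Rightarrow> real"
  assumes cf: "continuous_on UNIV f" and cf1: "continuous_on UNIV f1" and cf2: "continuous_on UNIV f2"
    and d1: "\<And>x1 x2. ((\<lambda>s. f (s,x2)) has_real_derivative f1 (x1,x2)) (at x1)"
    and d2: "\<And>x1 x2. ((\<lambda>s. f (x1,s)) has_real_derivative f2 (x1,x2)) (at x2)"
    and n: "n > 0"
    and Mc: "\<And>i j. i < n \<Longrightarrow> j < n \<Longrightarrow> integral (cell n i j) (\<lambda>x. \<bar>f x\<bar>) \<le> Mc"
  shows "integral (cbox (0,0) (1,1)) (\<lambda>x. (f x)\<^sup>2)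
    \<le> (real n)\<^sup>2 * Mc * integral (cbox (0,0) (1,1)) (\<lambda>x. \<bar>f x\<bar>)
       + 2 / (real n)\<^sup>2 * (integral (cbox (0,0) (1,1)) (\<lambda>x. (f1 x)\<^sup>2) + integral (cbox (0,0) (1,1)) (\<lambda>x. (f2 x)\<^sup>2))"
proof -
  define r where "r = 1 / real n"
  have r: "r > 0" using n by (simp add: r_def)
  have cellr: "cell n i j = cbox (real i / n, real j / n) (real i / n + r, real j / n + r)" for i j
    unfolding cell_def r_def by (simp add: add_divide_distrib add.commute)
  let ?A = "\<lambda>i j. integral (cell n i j) (\<lambda>x. \<bar>f x\<bar>)"
  let ?B = "\<lambda>i j. integral (cell n i j) (\<lambda>x. (f1 x)\<^sup>2) + integral (cell n i j) (\<lambda>x. (f2 x)\<^sup>2)"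
  have ci: "integral (cell n i j) (\<lambda>x. (f x)\<^sup>2) \<le> (real n)\<^sup>2 * Mc * ?A i j + 2 / (real n)\<^sup>2 * ?B i j"
    if "i < n" "j < n" for i j
  proof -
    have A0: "0 \<le> ?A i j" unfolding cell_def
      by (rule integral_nonneg) (auto intro: cintU continuous_intros cf)
    have "integral (cell n i j) (\<lambda>x. (f x)\<^sup>2) \<le> (?A i j)\<^sup>2 / r\<^sup>2 + 2 * r\<^sup>2 * ?B i j"
      unfolding cellr by (rule cell_ineq[OF cf cf1 cf2 d1 d2 r])
    also have "(?A i j)\<^sup>2 / r\<^sup>2 = (real n)\<^sup>2 * (?A i j * ?A i j)"
      unfolding r_def by (simp add: power2_eq_square)
    also have "\<dots> \<le> (real n)\<^sup>2 * (Mc * ?A i j)"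
      using A0 Mc[OF that] by (intro mult_left_mono mult_right_mono) auto
    also have "2 * r\<^sup>2 = 2 / (real n)\<^sup>2" unfolding r_def by (simp add: power_divide)
    finally show ?thesis by (simp add: mult.assoc)
  qed
  have "integral (cbox (0,0) (1,1)) (\<lambda>x. (f x)\<^sup>2) = (\<Sum>i<n. \<Sum>j<n. integral (cell n i j) (\<lambda>x. (f x)\<^sup>2))"
    by (intro grid_sum n continuous_intros cf)
  also have "\<dots> \<le> (\<Sum>i<n. \<Sum>j<n. (real n)\<^sup>2 * Mc * ?A i j + 2 / (real n)\<^sup>2 * ?B i j)"
    by (intro sum_mono ci) auto
  also have "\<dots> = (real n)\<^sup>2 * Mc * (\<Sum>i<n. \<Sum>j<n. ?A i j) + 2 / (real n)\<^sup>2 * ((\<Sum>i<n. \<Sum>j<n. integral (cell n i j) (\<lambda>x. (f1 x)\<^sup>2)) + (\<Sum>i<n. \<Sum>j<n. integral (cell n i j) (\<lambda>x. (f2 x)\<^sup>2)))"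
    by (simp add: sum.distrib sum_distrib_left distrib_left)
  also have "\<dots> = (real n)\<^sup>2 * Mc * integral (cbox (0,0) (1,1)) (\<lambda>x. \<bar>f x\<bar>)
       + 2 / (real n)\<^sup>2 * (integral (cbox (0,0) (1,1)) (\<lambda>x. (f1 x)\<^sup>2) + integral (cbox (0,0) (1,1)) (\<lambda>x. (f2 x)\<^sup>2))"
    by (subst (1 2 3) grid_sum[OF _ n]) (auto intro: continuous_intros cf cf1 cf2)
  finally show ?thesis .
qed

lemma fub2:
  fixes f :: "real \<times> real \<Rightarrow> real"
  assumes cf: "continuous_on UNIV f"
  shows "integral (cbox (a,c) (b,d)) f = integral {c..d} (\<lambda>y. integral {a..b} (\<lambda>x. f (x,y)))"
proof -
  have "integral (cbox (a,c) (b,d)) f = integral (cbox a b) (\<lambda>x. integral (cbox c d) (\<lambda>y. f (x,y)))"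
    using fub1[OF cf] by simp
  also have "\<dots> = integral (cbox c d) (\<lambda>y. integral (cbox a b) (\<lambda>x. f (x,y)))"
    by (rule integral_swap_continuous) (use continuous_on_subset[OF cf] in \<open>auto simp: case_prod_unfold\<close>)
  finally show ?thesis by simp
qed

lemma ibp_1d:
  fixes p p' q q' :: "real \<Rightarrow> real"
  assumes "\<And>x. (p has_real_derivative p' x) (at x)" "\<And>x. (q has_real_derivative q' x) (at x)"
    and "continuous_on UNIV p'" "continuous_on UNIV q'"
    and "p 1 * q 1 = p 0 * q 0"
  shows "integral {0..1} (\<lambda>x. p x * q' x) = - integral {0..1} (\<lambda>x. p' x * q x)"
proof -
  have cp: "continuous_on {0..1} p" "continuous_on {0..1} q"
    using assms(1,2) by (meson DERIV_isCont continuous_at_imp_continuous_on)+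
  have i1: "(\<lambda>x. p x * q' x) integrable_on {0..1}"
    by (intro cint continuous_intros cp continuous_on_subset[OF assms(4)]) auto
  have "((\<lambda>x. p' x * q x) has_integral (- integral {0..1} (\<lambda>x. p x * q' x))) {0..1}"
  proof (rule integration_by_parts[OF bounded_bilinear_mult])
    show "((\<lambda>x. p x * q' x) has_integral p 1 * q 1 - p 0 * q 0 - - integral {0..1} (\<lambda>x. p x * q' x)) {0..1}"
      using assms(5) integrable_integral[OF i1] by simp
  qed (use cp assms(1,2) in \<open>auto simp: has_real_derivative_iff_has_vector_derivative[symmetric]\<close>)
  thus ?thesis by (simp add: integral_unique)
qed

lemma ibp1:
  fixes a a1 b b1 :: "real \<times> real \<Rightarrow> real"
  assumes ca: "continuous_on UNIV a" "continuous_on UNIV a1"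
    and cb: "continuous_on UNIV b" "continuous_on UNIV b1"
    and da: "\<And>x1 x2. ((\<lambda>s. a (s,x2)) has_real_derivative a1 (x1,x2)) (at x1)"
    and db: "\<And>x1 x2. ((\<lambda>s. b (s,x2)) has_real_derivative b1 (x1,x2)) (at x1)"
    and pa: "\<And>x2. a (1,x2) = a (0,x2)" and pb: "\<And>x2. b (1,x2) = b (0,x2)"
  shows "integral (cbox (0,0) (1,1)) (\<lambda>x. a x * b1 x) = - integral (cbox (0,0) (1,1)) (\<lambda>x. a1 x * b x)"
proof -
  have "integral (cbox (0,0) (1,1)) (\<lambda>x. a x * b1 x) = integral {0..1} (\<lambda>y. integral {0..1} (\<lambda>x. a (x,y) * b1 (x,y)))"
    by (rule fub2) (intro continuous_intros ca cb)
  also have "\<dots> = integral {0..1} (\<lambda>y. - integral {0..1} (\<lambda>x. a1 (x,y) * b (x,y)))"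
    by (intro integral_cong ibp_1d da db slice_cont1 ca cb) (simp add: pa pb)
  also have "\<dots> = - integral {0..1} (\<lambda>y. integral {0..1} (\<lambda>x. a1 (x,y) * b (x,y)))"
    by (simp add: integral_neg)
  also have "integral {0..1} (\<lambda>y. integral {0..1} (\<lambda>x. a1 (x,y) * b (x,y))) = integral (cbox (0,0) (1,1)) (\<lambda>x. a1 x * b x)"
    by (rule fub2[symmetric]) (intro continuous_intros ca cb)
  finally show ?thesis .
qed

lemma ibp2:
  fixes a a2 b b2 :: "real \<times> real \<Rightarrow> real"
  assumes ca: "continuous_on UNIV a" "continuous_on UNIV a2"
    and cb: "continuous_on UNIV b" "continuous_on UNIV b2"
    and da: "\<And>x1 x2. ((\<lambda>s. a (x1,s)) has_real_derivative a2 (x1,x2)) (at x2)"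
    and db: "\<And>x1 x2. ((\<lambda>s. b (x1,s)) has_real_derivative b2 (x1,x2)) (at x2)"
    and pa: "\<And>x1. a (x1,1) = a (x1,0)" and pb: "\<And>x1. b (x1,1) = b (x1,0)"
  shows "integral (cbox (0,0) (1,1)) (\<lambda>x. a x * b2 x) = - integral (cbox (0,0) (1,1)) (\<lambda>x. a2 x * b x)"
proof -
  have "integral (cbox (0,0) (1,1)) (\<lambda>x. a x * b2 x) = integral {0..1} (\<lambda>y. integral {0..1} (\<lambda>x. a (y,x) * b2 (y,x)))"
    by (rule fub1) (intro continuous_intros ca cb)
  also have "\<dots> = integral {0..1} (\<lambda>y. - integral {0..1} (\<lambda>x. a2 (y,x) * b (y,x)))"
    by (intro integral_cong ibp_1d da db slice_cont1 ca cb) (simp add: pa pb)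
  also have "\<dots> = - integral {0..1} (\<lambda>y. integral {0..1} (\<lambda>x. a2 (y,x) * b (y,x)))"
    by (simp add: integral_neg)
  also have "integral {0..1} (\<lambda>y. integral {0..1} (\<lambda>x. a2 (y,x) * b (y,x))) = integral (cbox (0,0) (1,1)) (\<lambda>x. a2 x * b x)"
    by (rule fub1[symmetric]) (intro continuous_intros ca cb)
  finally show ?thesis .
qed

lemma energy_slice:
  fixes w w1 w2 w11 w22 u1 u2 u11 u22 :: "real \<times> real \<Rightarrow> real"
  assumes c: "continuous_on UNIV w" "continuous_on UNIV w1" "continuous_on UNIV w2"
      "continuous_on UNIV w11" "continuous_on UNIV w22" "continuous_on UNIV u1" "continuous_on UNIV u2"
      "continuous_on UNIV u11" "continuous_on UNIV u22"
    and dw1: "\<And>x1 x2. ((\<lambda>s. w (s,x2)) has_real_derivative w1 (x1,x2)) (at x1)"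
    and dw2: "\<And>x1 x2. ((\<lambda>s. w (x1,s)) has_real_derivative w2 (x1,x2)) (at x2)"
    and dw11: "\<And>x1 x2. ((\<lambda>s. w1 (s,x2)) has_real_derivative w11 (x1,x2)) (at x1)"
    and dw22: "\<And>x1 x2. ((\<lambda>s. w2 (x1,s)) has_real_derivative w22 (x1,x2)) (at x2)"
    and du1: "\<And>x1 x2. ((\<lambda>s. u1 (s,x2)) has_real_derivative u11 (x1,x2)) (at x1)"
    and du2: "\<And>x1 x2. ((\<lambda>s. u2 (x1,s)) has_real_derivative u22 (x1,x2)) (at x2)"
    and p1: "\<And>x2. w (1,x2) = w (0,x2)" "\<And>x2. w1 (1,x2) = w1 (0,x2)" "\<And>x2. u1 (1,x2) = u1 (0,x2)"
    and p2: "\<And>x1. w (x1,1) = w (x1,0)" "\<And>x1. w2 (x1,1) = w2 (x1,0)" "\<And>x1. u2 (x1,1) = u2 (x1,0)"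
    and div: "\<And>x. u11 x + u22 x = 0"
  shows "integral (cbox (0,0) (1,1)) (\<lambda>x. 2 * w x * (\<nu> * (w11 x + w22 x) - u1 x * w1 x - u2 x * w2 x))
     = - 2 * \<nu> * integral (cbox (0,0) (1,1)) (\<lambda>x. (w1 x)\<^sup>2 + (w2 x)\<^sup>2)"
proof -
  let ?Q = "cbox (0::real,0::real) (1,1)"
  note ci = cintU[of _ "(0,0)" "(1,1)"]
  have A: "integral ?Q (\<lambda>x. w x * w11 x) = - integral ?Q (\<lambda>x. w1 x * w1 x)"
    by (rule ibp1[OF c(1,2,2,4) dw1 dw11 p1(1,2)])
  have B: "integral ?Q (\<lambda>x. w x * w22 x) = - integral ?Q (\<lambda>x. w2 x * w2 x)"
    by (rule ibp2[OF c(1,3,3,5) dw2 dw22 p2(1,2)])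
  have C1: "integral ?Q (\<lambda>x. (u1 x * (w x)\<^sup>2) * 0) = - integral ?Q (\<lambda>x. (u11 x * (w x)\<^sup>2 + u1 x * (2 * w x * w1 x)) * 1)"
  proof (rule ibp1)
    show "((\<lambda>s. u1 (s, x2) * (w (s, x2))\<^sup>2) has_real_derivative u11 (x1, x2) * (w (x1, x2))\<^sup>2 + u1 (x1, x2) * (2 * w (x1, x2) * w1 (x1, x2))) (at x1)" for x1 x2
      by (auto intro!: derivative_eq_intros du1 dw1)
  qed (auto intro!: continuous_intros c simp: p1)
  have C2: "integral ?Q (\<lambda>x. (u2 x * (w x)\<^sup>2) * 0) = - integral ?Q (\<lambda>x. (u22 x * (w x)\<^sup>2 + u2 x * (2 * w x * w2 x)) * 1)"
  proof (rule ibp2)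
    show "((\<lambda>s. u2 (x1, s) * (w (x1, s))\<^sup>2) has_real_derivative u22 (x1, x2) * (w (x1, x2))\<^sup>2 + u2 (x1, x2) * (2 * w (x1, x2) * w2 (x1, x2))) (at x2)" for x1 x2
      by (auto intro!: derivative_eq_intros du2 dw2)
  qed (auto intro!: continuous_intros c simp: p2)
  have C: "integral ?Q (\<lambda>x. w x * (u1 x * w1 x + u2 x * w2 x)) = 0"
  proof -
    have "0 = integral ?Q (\<lambda>x. (u11 x * (w x)\<^sup>2 + u1 x * (2 * w x * w1 x)) + (u22 x * (w x)\<^sup>2 + u2 x * (2 * w x * w2 x)))"
      using C1 C2 by (simp add: integral_add ci continuous_intros c)
    also have "\<dots> = integral ?Q (\<lambda>x. 2 * (w x * (u1 x * w1 x + u2 x * w2 x)))"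
    proof (rule integral_cong)
      fix x
      have "u11 x * (w x)\<^sup>2 + u22 x * (w x)\<^sup>2 = 0" using div[of x] by (metis distrib_right mult_zero_left)
      thus "(u11 x * (w x)\<^sup>2 + u1 x * (2 * w x * w1 x)) + (u22 x * (w x)\<^sup>2 + u2 x * (2 * w x * w2 x)) = 2 * (w x * (u1 x * w1 x + u2 x * w2 x))"
        by (simp add: algebra_simps)
    qed
    also have "\<dots> = 2 * integral ?Q (\<lambda>x. w x * (u1 x * w1 x + u2 x * w2 x))" by simp
    finally show ?thesis by simp
  qed
  have "integral ?Q (\<lambda>x. 2 * w x * (\<nu> * (w11 x + w22 x) - u1 x * w1 x - u2 x * w2 x))
     = integral ?Q (\<lambda>x. 2 * \<nu> * (w x * w11 x) + 2 * \<nu> * (w x * w22 x) - 2 * (w x * (u1 x * w1 x + u2 x * w2 x)))"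
    by (rule integral_cong) (simp add: algebra_simps)
  also have "\<dots> = 2 * \<nu> * integral ?Q (\<lambda>x. w x * w11 x) + 2 * \<nu> * integral ?Q (\<lambda>x. w x * w22 x) - 2 * integral ?Q (\<lambda>x. w x * (u1 x * w1 x + u2 x * w2 x))"
  proof (rule integral_unique)
    show "((\<lambda>x. 2 * \<nu> * (w x * w11 x) + 2 * \<nu> * (w x * w22 x) - 2 * (w x * (u1 x * w1 x + u2 x * w2 x))) has_integral
      2 * \<nu> * integral ?Q (\<lambda>x. w x * w11 x) + 2 * \<nu> * integral ?Q (\<lambda>x. w x * w22 x) - 2 * integral ?Q (\<lambda>x. w x * (u1 x * w1 x + u2 x * w2 x))) ?Q"
      by (intro has_integral_add has_integral_diff has_integral_mult_right integrable_integral ci continuous_intros c)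
  qed
  also have "\<dots> = - 2 * \<nu> * (integral ?Q (\<lambda>x. w1 x * w1 x) + integral ?Q (\<lambda>x. w2 x * w2 x))"
    using A B C by (simp add: algebra_simps)
  also have "integral ?Q (\<lambda>x. w1 x * w1 x) + integral ?Q (\<lambda>x. w2 x * w2 x) = integral ?Q (\<lambda>x. (w1 x)\<^sup>2 + (w2 x)\<^sup>2)"
    by (simp add: integral_add ci continuous_intros c power2_eq_square)
  finally show ?thesis .
qed

lemma energy_deriv:
  fixes W Wt :: "(real \<times> real) \<times> real \<Rightarrow> real"
  assumes cW: "continuous_on {p. snd p > 0} W" and cWt: "continuous_on {p. snd p > 0} Wt"
    and dt: "\<And>x s. s > 0 \<Longrightarrow> ((\<lambda>\<tau>. W (x,\<tau>)) has_real_derivative Wt (x,s)) (at s)"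
    and t: "t > 0"
  shows "((\<lambda>s. integral (cbox (0,0) (1,1)) (\<lambda>x. (W (x,s))\<^sup>2)) has_real_derivative
           integral (cbox (0,0) (1,1)) (\<lambda>x. 2 * W (x,t) * Wt (x,t))) (at t)"
proof -
  let ?U = "{t/2<..<2*t}"
  have tU: "t \<in> ?U" using t by auto
  have "((\<lambda>s. integral (cbox (0,0) (1,1)) (\<lambda>x. (W (x,s))\<^sup>2)) has_field_derivative
           integral (cbox (0,0) (1,1)) (\<lambda>x. 2 * W (x,t) * Wt (x,t))) (at t within ?U)"
  proof (rule leibniz_rule_field_derivative[where fx="\<lambda>s x. 2 * W (x,s) * Wt (x,s)"])
    fix s :: real and x :: "real \<times> real" assume "s \<in> ?U"
    hence s: "s > 0" using t by auto
    show "((\<lambda>s. (W (x,s))\<^sup>2) has_field_derivative 2 * W (x,s) * Wt (x,s)) (at s within ?U)"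
      by (rule has_field_derivative_at_within) (auto intro!: derivative_eq_intros dt[OF s])
  next
    fix s :: real assume "s \<in> ?U"
    hence s: "s > 0" using t by auto
    have "continuous_on UNIV (\<lambda>x. (W (x,s))\<^sup>2)"
      using s by (intro continuous_intros continuous_on_compose2[OF cW]) auto
    thus "(\<lambda>x. (W (x,s))\<^sup>2) integrable_on cbox (0,0) (1,1)" by (rule cintU)
  next
    have sub: "(\<lambda>(s,x). (x,s)) ` (?U \<times> cbox (0,0) (1,1)) \<subseteq> {p. snd p > 0}"
      using t by auto
    show "continuous_on (?U \<times> cbox (0,0) (1,1)) (\<lambda>(s, x). 2 * W (x,s) * Wt (x,s))"
    proof -
      have "continuous_on (?U \<times> cbox (0,0) (1,1)) (\<lambda>p. 2 * W ((\<lambda>(s,x). (x,s)) p) * Wt ((\<lambda>(s,x). (x,s)) p))"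
        by (intro continuous_intros continuous_on_compose2[OF cW _ sub] continuous_on_compose2[OF cWt _ sub])
          (auto simp: case_prod_unfold intro!: continuous_intros)
      thus ?thesis by (simp add: case_prod_unfold)
    qed
  qed (use tU in auto)
  thus ?thesis using at_within_open[OF tU] by simp
qed

lemma basis3: "((1,0),0) \<in> (Basis :: ((real \<times> real) \<times> real) set)"
  "((0,1),0) \<in> (Basis :: ((real \<times> real) \<times> real) set)"
  "((0,0),1) \<in> (Basis :: ((real \<times> real) \<times> real) set)"
  by (auto simp: Basis_prod_def zero_prod_def)

lemma dd_deriv:
  assumes "(\<lambda>s. G (p + s *\<^sub>R v)) differentiable (at 0)"
  shows "((\<lambda>s. G (p + s *\<^sub>R v)) has_real_derivative dd v G p) (at 0)"
  using assms unfolding dd_def by (simp add: DERIV_deriv_iff_real_differentiable)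

lemma smooth_slices:
  fixes F :: "(real \<times> real) \<times> real \<Rightarrow> real"
  assumes sm: "smooth_on {p. snd p > 0} F" and vs: "set vs \<subseteq> Basis" and t: "t > 0"
  shows "continuous_on {p. snd p > 0} (dds vs F)"
    and "continuous_on UNIV (\<lambda>x. dds vs F (x,t))"
    and "((\<lambda>s. dds vs F ((s,x2),t)) has_real_derivative dds (((1,0),0) # vs) F ((x1,x2),t)) (at x1)"
    and "((\<lambda>s. dds vs F ((x1,s),t)) has_real_derivative dds (((0,1),0) # vs) F ((x1,x2),t)) (at x2)"
    and "((\<lambda>s. dds vs F (x,s)) has_real_derivative dds (((0,0),1) # vs) F (x,t)) (at t)"
proof -
  have C: "continuous_on {p. snd p > 0} (dds vs F)" and
    Dv: "\<And>v p. v \<in> Basis \<Longrightarrow> snd p > 0 \<Longrightarrow> (\<lambda>s::real. dds vs F (p + s *\<^sub>R v)) differentiable (at 0)"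
    using sm vs unfolding smooth_on_def by blast+
  show "continuous_on {p. snd p > 0} (dds vs F)" by (rule C)
  show "continuous_on UNIV (\<lambda>x. dds vs F (x,t))"
    using t by (intro continuous_on_compose2[OF C] continuous_intros) auto
  have G: "((\<lambda>s. dds vs F (p + s *\<^sub>R v)) has_real_derivative dds (v # vs) F p) (at 0)"
    if "v \<in> Basis" "snd p > 0" for v p
    using dd_deriv[OF Dv[OF that]] by simp
  have sh: "((\<lambda>s. g (s + c)) has_real_derivative D) (at 0) \<Longrightarrow> (g has_real_derivative D) (at c)" for g c D
    using DERIV_shift[of g D 0 c] by simp
  show "((\<lambda>s. dds vs F ((s,x2),t)) has_real_derivative dds (((1,0),0) # vs) F ((x1,x2),t)) (at x1)"
    apply (rule sh)
    using G[of "((1,0),0)" "((x1,x2),t)"] basis3 t by (simp add: add.commute)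
  show "((\<lambda>s. dds vs F ((x1,s),t)) has_real_derivative dds (((0,1),0) # vs) F ((x1,x2),t)) (at x2)"
    apply (rule sh)
    using G[of "((0,1),0)" "((x1,x2),t)"] basis3 t by (simp add: add.commute)
  show "((\<lambda>s. dds vs F (x,s)) has_real_derivative dds (((0,0),1) # vs) F (x,t)) (at t)"
    apply (rule sh)
    using G[of "((0,0),1)" "(x,t)"] basis3 t by (simp add: add.commute zero_prod_def[symmetric])
qed

lemma dds_periodic:
  fixes F :: "(real \<times> real) \<times> real \<Rightarrow> real"
  assumes per: "\<And>x t. F (x + a, t) = F (x, t)"
  shows "dds vs F (x + a, t) = dds vs F (x, t)"
proof (induction vs arbitrary: x t)
  case Nil thus ?case using per by simp
next
  case (Cons v vs)
  have "(\<lambda>s. dds vs F ((x + a, t) + s *\<^sub>R v)) = (\<lambda>s. dds vs F ((x, t) + s *\<^sub>R v))"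
  proof
    fix s
    have "(x + a, t) + s *\<^sub>R v = ((x + s *\<^sub>R fst v) + a, t + s * snd v)"
      by (cases v) (simp add: algebra_simps)
    moreover have "(x, t) + s *\<^sub>R v = (x + s *\<^sub>R fst v, t + s * snd v)"
      by (cases v) simp
    ultimately show "dds vs F ((x + a, t) + s *\<^sub>R v) = dds vs F ((x, t) + s *\<^sub>R v)"
      using Cons by simp
  qed
  thus ?case by (simp add: dd_def)
qed

lemma NS_unfold:
  assumes "NS_sol \<nu> u0 u om"
  shows "smooth_on {p. snd p > 0} om" "smooth_on {p. snd p > 0} (\<lambda>p. fst (u p))"
    "smooth_on {p. snd p > 0} (\<lambda>p. snd (u p))"
    "\<And>x t. om (x + (1,0), t) = om (x, t)" "\<And>x t. om (x + (0,1), t) = om (x, t)"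
    "\<And>x t. fst (u (x + (1,0), t)) = fst (u (x, t))" "\<And>x t. snd (u (x + (0,1), t)) = snd (u (x, t))"
    "\<And>p. snd p > 0 \<Longrightarrow> dd ((1,0),0) (\<lambda>p. fst (u p)) p + dd ((0,1),0) (\<lambda>p. snd (u p)) p = 0"
    "\<And>p. snd p > 0 \<Longrightarrow> dd ((0,0),1) om p + fst (u p) * dd ((1,0),0) om p + snd (u p) * dd ((0,1),0) om p
                   = \<nu> * (dd ((1,0),0) (dd ((1,0),0) om) p + dd ((0,1),0) (dd ((0,1),0) om) p)"
  using assms unfolding NS_sol_def Let_def periodic2_def by auto

lemma NS_energy:
  assumes sol: "NS_sol \<nu> u0 u om" and t: "t > 0"
  shows "((\<lambda>s. integral (cbox (0,0) (1,1)) (\<lambda>x. (om (x,s))\<^sup>2)) has_real_derivative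
     - 2 * \<nu> * integral (cbox (0,0) (1,1)) (\<lambda>x. (dds [((1,0),0)] om (x,t))\<^sup>2 + (dds [((0,1),0)] om (x,t))\<^sup>2)) (at t)"
proof -
  note N = NS_unfold[OF sol]
  define e1 :: "(real \<times> real) \<times> real" where "e1 = ((1,0),0)"
  define e2 :: "(real \<times> real) \<times> real" where "e2 = ((0,1),0)"
  define et :: "(real \<times> real) \<times> real" where "et = ((0,0),1)"
  define U1 where "U1 = (\<lambda>p. fst (u p))"
  define U2 where "U2 = (\<lambda>p. snd (u p))"
  have B: "e1 \<in> Basis" "e2 \<in> Basis" "et \<in> Basis" unfolding e1_def e2_def et_def using basis3 by auto
  note S0 = smooth_slices[OF N(1), of "[]", simplified]
  note S1 = smooth_slices[OF N(1), of "[e1]", simplified, OF B(1)]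
  note S2 = smooth_slices[OF N(1), of "[e2]", simplified, OF B(2)]
  note U1s = smooth_slices[OF N(2)[folded U1_def], of "[]", simplified]
  note U2s = smooth_slices[OF N(3)[folded U2_def], of "[]", simplified]
  note U1s1 = smooth_slices[OF N(2)[folded U1_def], of "[e1]", simplified, OF B(1)]
  note U2s2 = smooth_slices[OF N(3)[folded U2_def], of "[e2]", simplified, OF B(2)]
  note S11 = smooth_slices[OF N(1), of "[e1,e1]", simplified, OF B(1)]
  note S22 = smooth_slices[OF N(1), of "[e2,e2]", simplified, OF B(2)]
  have P1: "om ((1,x2),t) = om ((0,x2),t)" "dd e1 om ((1,x2),t) = dd e1 om ((0,x2),t)" "U1 ((1,x2),t) = U1 ((0,x2),t)" for x2
    using N(4)[of "(0,x2)" t] dds_periodic[of om "(1,0)" "[e1]" "(0,x2)" t] N(4) N(6)[of "(0,x2)" t]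
    unfolding U1_def by auto
  have P2: "om ((x1,1),t) = om ((x1,0),t)" "dd e2 om ((x1,1),t) = dd e2 om ((x1,0),t)" "U2 ((x1,1),t) = U2 ((x1,0),t)" for x1
    using N(5)[of "(x1,0)" t] dds_periodic[of om "(0,1)" "[e2]" "(x1,0)" t] N(5) N(7)[of "(x1,0)" t]
    unfolding U2_def by auto
  note St = smooth_slices[OF N(1), of "[et]", simplified, OF B(3)]
  have pde: "dd et om (x,t) = \<nu> * (dd e1 (dd e1 om) (x,t) + dd e2 (dd e2 om) (x,t)) - U1 (x,t) * dd e1 om (x,t) - U2 (x,t) * dd e2 om (x,t)" for x
    using N(9)[of "(x,t)"] t unfolding e1_def e2_def et_def U1_def U2_def by (simp add: algebra_simps)
  have div: "dd e1 U1 (x,t) + dd e2 U2 (x,t) = 0" for x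
    using N(8)[of "(x,t)"] t unfolding e1_def e2_def U1_def U2_def by simp
  have ED: "((\<lambda>s. integral (cbox (0,0) (1,1)) (\<lambda>x. (om (x,s))\<^sup>2)) has_real_derivative
           integral (cbox (0,0) (1,1)) (\<lambda>x. 2 * om (x,t) * dd et om (x,t))) (at t)"
    by (rule energy_deriv[OF S0(1)[OF t] St(1)[OF t] _ t]) (use S0(5) et_def in simp)
  have "integral (cbox (0,0) (1,1)) (\<lambda>x. 2 * om (x,t) * dd et om (x,t))
    = integral (cbox (0,0) (1,1)) (\<lambda>x. 2 * om (x,t) * (\<nu> * (dd e1 (dd e1 om) (x,t) + dd e2 (dd e2 om) (x,t)) - U1 (x,t) * dd e1 om (x,t) - U2 (x,t) * dd e2 om (x,t)))"
    using pde by simp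
  also have "\<dots> = - 2 * \<nu> * integral (cbox (0,0) (1,1)) (\<lambda>x. (dd e1 om (x,t))\<^sup>2 + (dd e2 om (x,t))\<^sup>2)"
  proof (rule energy_slice[where ?w="\<lambda>x. om (x,t)" and ?w1.0="\<lambda>x. dd e1 om (x,t)" and ?w2.0="\<lambda>x. dd e2 om (x,t)"
       and ?w11.0="\<lambda>x. dd e1 (dd e1 om) (x,t)" and ?w22.0="\<lambda>x. dd e2 (dd e2 om) (x,t)"
       and ?u1.0="\<lambda>x. U1 (x,t)" and ?u2.0="\<lambda>x. U2 (x,t)" and ?u11.0="\<lambda>x. dd e1 U1 (x,t)" and ?u22.0="\<lambda>x. dd e2 U2 (x,t)"])
  qed (use S0 S1 S2 S11 S22 U1s U2s U1s1 U2s2 t div P1 P2 in \<open>simp_all add: e1_def e2_def\<close>)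
  finally show ?thesis using ED unfolding e1_def e2_def by simp
qed

lemma nn_cont:
  fixes g :: "real \<times> real \<Rightarrow> real"
  assumes "continuous_on UNIV g" "\<And>x. g x \<ge> 0"
  shows "(\<integral>\<^sup>+ y\<in>cbox a b. ennreal (g y) \<partial>lborel) = ennreal (integral (cbox a b) g)"
  using nn_integral_has_integral_lebesgue'[of "cbox a b" g "integral (cbox a b) g"] assms
  by (auto intro: integrable_integral cintU)

lemma tdist_le: "tdist x y \<le> dist x y"
proof -
  have "tdist x y \<le> dist x (y + (real_of_int 0, real_of_int 0))"
    unfolding tdist_def by (rule cInf_lower) (blast, auto intro!: bdd_belowI[of _ 0])
  thus ?thesis by (simp add: zero_prod_def[symmetric])
qed

lemma cell_sub:
  assumes "i < n" "j < n" "1 / real n \<le> \<rho>"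
  shows "cell n i j \<subseteq> tball ((real i + 1/2) / n, (real j + 1/2) / n) \<rho>"
proof
  fix y assume y: "y \<in> cell n i j"
  obtain y1 y2 where yy: "y = (y1,y2)" by (cases y)
  have n: "n > 0" using assms by simp
  have b: "real i / n \<le> y1" "y1 \<le> real (Suc i) / n" "real j / n \<le> y2" "y2 \<le> real (Suc j) / n"
    using y unfolding cell_def yy by auto
  have "real (Suc i) / n \<le> 1" "real (Suc j) / n \<le> 1" using assms n by (auto simp: field_simps)
  moreover have "0 \<le> y1" using b(1) order_trans[OF divide_nonneg_nonneg[of "real i" "real n"]] by auto
  moreover have "0 \<le> y2" using b(3) order_trans[OF divide_nonneg_nonneg[of "real j" "real n"]] by auto
  ultimately have inQ: "y \<in> cellQ" unfolding cellQ_def yy using b by auto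
  have d1: "\<bar>(real i + 1/2) / n - y1\<bar> \<le> 1 / (2 * n)" using b n by (auto simp: field_simps abs_le_iff)
  have d2: "\<bar>(real j + 1/2) / n - y2\<bar> \<le> 1 / (2 * n)" using b n by (auto simp: field_simps abs_le_iff)
  have "dist ((real i + 1/2) / n, (real j + 1/2) / n) y = sqrt (((real i + 1/2) / n - y1)\<^sup>2 + ((real j + 1/2) / n - y2)\<^sup>2)"
    unfolding yy by (simp add: dist_Pair_Pair dist_real_def)
  also have "\<dots> \<le> sqrt ((1 / (2 * n))\<^sup>2 + (1 / (2 * n))\<^sup>2)"
    using d1 d2 by (intro real_sqrt_le_mono add_mono) (auto simp: abs_le_square_iff[symmetric])
  also have "\<dots> < sqrt ((1 / n)\<^sup>2)"
    using n by (intro real_sqrt_less_mono) (simp add: power2_eq_square field_simps)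
  also have "\<dots> = 1 / n" by simp
  finally have "dist ((real i + 1/2) / n, (real j + 1/2) / n) y < \<rho>" using assms(3) by linarith
  thus "y \<in> tball ((real i + 1/2) / n, (real j + 1/2) / n) \<rho>"
    unfolding tball_def using inQ le_less_trans[OF tdist_le] by blast
qed

lemma cell_mass:
  fixes om :: "(real \<times> real) \<times> real \<Rightarrow> real"
  assumes c: "continuous_on UNIV (\<lambda>y. om (y,t))" and "i < n" "j < n" "1 / real n \<le> \<rho>"
    and B: "\<And>x. ball_mass om t x \<rho> \<le> ennreal Bv" and "Bv \<ge> 0"
  shows "integral (cell n i j) (\<lambda>y. \<bar>om (y,t)\<bar>) \<le> Bv"
proof -
  let ?c = "((real i + 1/2) / n, (real j + 1/2) / n)"
  have "ennreal (integral (cell n i j) (\<lambda>y. \<bar>om (y,t)\<bar>)) = (\<integral>\<^sup>+ y\<in>cell n i j. ennreal \<bar>om (y,t)\<bar> \<partial>lborel)"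
    unfolding cell_def by (rule nn_cont[symmetric]) (auto intro: continuous_intros c)
  also have "\<dots> \<le> (\<integral>\<^sup>+ y\<in>tball ?c \<rho>. ennreal \<bar>om (y,t)\<bar> \<partial>lborel)"
    using cell_sub[OF assms(2-4)] by (intro nn_integral_mono) (auto split: split_indicator)
  also have "\<dots> \<le> ennreal Bv" using B[of ?c] unfolding ball_mass_def .
  finally show ?thesis using assms(6) by (auto simp: ennreal_le_iff2)
qed

lemma NS_key:
  assumes sol: "NS_sol \<nu> u0 u om" and t: "t > 0"
    and Bf: "\<And>r x. 0 < r \<Longrightarrow> r < 1/2 \<Longrightarrow> ball_mass om t x r \<le> ennreal (B r)"
    and B0: "\<And>r. 0 < r \<Longrightarrow> r < 1/2 \<Longrightarrow> B r \<ge> 0"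
    and r: "0 < r" "r < 1/2"
  shows "integral (cbox (0,0) (1,1)) (\<lambda>x. (om (x,t))\<^sup>2)
     \<le> 4 * B r * (9 * B (1/3)) / r\<^sup>2
       + 2 * r\<^sup>2 * integral (cbox (0,0) (1,1)) (\<lambda>x. (dds [((1,0),0)] om (x,t))\<^sup>2 + (dds [((0,1),0)] om (x,t))\<^sup>2)"
proof -
  note N = NS_unfold[OF sol]
  note S0 = smooth_slices[OF N(1), of "[]", simplified, OF t]
  note S1 = smooth_slices[OF N(1), of "[((1,0),0)]", simplified, OF basis3(1) t]
  note S2 = smooth_slices[OF N(1), of "[((0,1),0)]", simplified, OF basis3(2) t]
  define f where "f = (\<lambda>x. om (x,t))"
  define f1 where "f1 = (\<lambda>x. dd ((1,0),0) om (x,t))"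
  define f2 where "f2 = (\<lambda>x. dd ((0,1),0) om (x,t))"
  have cf: "continuous_on UNIV f" "continuous_on UNIV f1" "continuous_on UNIV f2"
    using S0 S1 S2 unfolding f_def f1_def f2_def by auto
  have d1: "((\<lambda>s. f (s,x2)) has_real_derivative f1 (x1,x2)) (at x1)" for x1 x2
    using S0 unfolding f_def f1_def by auto
  have d2: "((\<lambda>s. f (x1,s)) has_real_derivative f2 (x1,x2)) (at x2)" for x1 x2
    using S0 unfolding f_def f2_def by auto
  define L where "L = integral (cbox (0,0) (1,1)) (\<lambda>x. \<bar>f x\<bar>)"
  have L0: "0 \<le> L" unfolding L_def by (rule integral_nonneg) (auto intro: cintU continuous_intros cf)
  have B3: "0 \<le> B (1/3)" by (rule B0) auto
  have Lb: "L \<le> 9 * B (1/3)"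
  proof -
    have "L = (\<Sum>i<3. \<Sum>j<3. integral (cell 3 i j) (\<lambda>x. \<bar>f x\<bar>))"
      unfolding L_def by (rule grid_sum) (auto intro: continuous_intros cf)
    also have "\<dots> \<le> (\<Sum>i<(3::nat). \<Sum>j<(3::nat). B (1/3))"
    proof (intro sum_mono)
      fix i j :: nat assume "i \<in> {..<3}" "j \<in> {..<3}"
      thus "integral (cell 3 i j) (\<lambda>x. \<bar>f x\<bar>) \<le> B (1/3)"
        unfolding f_def by (intro cell_mass[of om t i 3 j "1/3"] Bf B3 S0) auto
    qed
    finally show ?thesis by simp
  qed
  define n where "n = nat \<lceil>1 / r\<rceil>"
  have nr: "1 / r \<le> real n" "real n < 1 / r + 1" unfolding n_def using r by (auto, linarith)
  have n0: "n > 0" using nr r by (smt (verit) divide_pos_pos of_nat_0 of_nat_0_less_iff)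
  have invn: "1 / real n \<le> r" using nr r n0 by (auto simp: field_simps)
  have Br: "0 \<le> B r" using B0 r by auto
  have "integral (cbox (0,0) (1,1)) (\<lambda>x. (f x)\<^sup>2) \<le> (real n)\<^sup>2 * B r * L
       + 2 / (real n)\<^sup>2 * (integral (cbox (0,0) (1,1)) (\<lambda>x. (f1 x)\<^sup>2) + integral (cbox (0,0) (1,1)) (\<lambda>x. (f2 x)\<^sup>2))"
    unfolding L_def
  proof (rule grid_ineq[OF cf d1 d2 n0])
    fix i j assume "i < n" "j < n"
    thus "integral (cell n i j) (\<lambda>x. \<bar>f x\<bar>) \<le> B r"
      unfolding f_def by (intro cell_mass[of om t i n j r] Bf Br S0 invn r)
  qed
  also have "\<dots> \<le> 4 / r\<^sup>2 * B r * L + 2 * r\<^sup>2 * (integral (cbox (0,0) (1,1)) (\<lambda>x. (f1 x)\<^sup>2) + integral (cbox (0,0) (1,1)) (\<lambda>x. (f2 x)\<^sup>2))"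
  proof (intro add_mono mult_right_mono)
    have "real n \<le> 2 / r" using nr r by (simp add: field_simps)
    hence "(real n)\<^sup>2 \<le> (2 / r)\<^sup>2" by (intro power_mono) auto
    thus "(real n)\<^sup>2 \<le> 4 / r\<^sup>2" by (simp add: power_divide)
    have "(1 / real n)\<^sup>2 \<le> r\<^sup>2" using invn by (intro power_mono) auto
    thus "2 / (real n)\<^sup>2 \<le> 2 * r\<^sup>2" by (simp add: power_divide)
    show "0 \<le> integral (cbox (0,0) (1,1)) (\<lambda>x. (f1 x)\<^sup>2) + integral (cbox (0,0) (1,1)) (\<lambda>x. (f2 x)\<^sup>2)"
      by (intro add_nonneg_nonneg integral_nonneg) (auto intro: cintU continuous_intros cf)
  qed (use Br L0 in auto)
  also have "4 / r\<^sup>2 * B r * L \<le> 4 / r\<^sup>2 * B r * (9 * B (1/3))"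
    using Lb Br by (intro mult_left_mono) auto
  finally show ?thesis
    unfolding f_def f1_def f2_def
    by (simp add: integral_add cintU continuous_intros cf[unfolded f1_def f2_def] algebra_simps)
qed

lemma ode_growth:
  fixes Z Z' :: "real \<Rightarrow> real"
  assumes t: "t > 0" and d: "\<And>s. s \<in> {t/2..t} \<Longrightarrow> (Z has_real_derivative Z' s) (at s)"
    and c: "\<And>s. s \<in> {t/2..t} \<Longrightarrow> Z' s \<ge> c" and z0: "Z (t/2) \<ge> 0"
  shows "Z t \<ge> c * t / 2"
proof -
  obtain z where z: "t/2 < z" "z < t" "Z t - Z (t/2) = (t - t/2) * Z' z"
    using MVT2[of "t/2" t Z Z'] d t by force
  have "Z' z \<ge> c" using c z by auto
  hence "t * Z' z \<ge> t * c" using t by (intro mult_left_mono) auto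
  moreover have "Z t = Z (t/2) + (t/2) * Z' z" using z by (simp add: field_simps)
  ultimately show ?thesis using z0 by (simp add: field_simps)
qed

lemma Y_mono:
  fixes Y Y' :: "real \<Rightarrow> real"
  assumes d: "\<And>s. s > 0 \<Longrightarrow> (Y has_real_derivative Y' s) (at s)" and n: "\<And>s. s > 0 \<Longrightarrow> Y' s \<le> 0"
    and "0 < a" "a \<le> b"
  shows "Y b \<le> Y a"
proof (rule DERIV_nonpos_imp_nonincreasing[OF assms(4)])
  fix x assume "a \<le> x" "x \<le> b"
  hence "x > 0" using assms(3) by simp
  thus "\<exists>y. (Y has_real_derivative y) (at x) \<and> y \<le> 0" using d n by blast
qed

definition ca :: "real \<Rightarrow> real \<Rightarrow> real" where
  "ca K \<alpha> = max (8 * K) (((2 / (2 - \<alpha>)) / 2 * (2 * K) powr (- (2 / (2 - \<alpha>))) / 2) powr (- ((2 - \<alpha>) / 2)))"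

lemma ode_a:
  fixes Y Dn :: "real \<Rightarrow> real"
  assumes \<nu>: "\<nu> > 0" and \<alpha>: "0 < \<alpha>" "\<alpha> < 2" and K: "K > 0"
    and dY: "\<And>s. s > 0 \<Longrightarrow> (Y has_real_derivative - 2 * \<nu> * Dn s) (at s)"
    and Dn0: "\<And>s. s > 0 \<Longrightarrow> Dn s \<ge> 0"
    and Y0: "\<And>s. s > 0 \<Longrightarrow> Y s \<ge> 0"
    and key: "\<And>s r. s > 0 \<Longrightarrow> 0 < r \<Longrightarrow> r < 1/2 \<Longrightarrow> Y s \<le> K * r powr (\<alpha> - 2) + 2 * r\<^sup>2 * Dn s"
  shows "ca K \<alpha> > 0 \<and> (\<forall>t>0. \<nu> * t < 1 \<longrightarrow> Y t \<le> ca K \<alpha> / (\<nu> * t) powr ((2 - \<alpha>) / 2))"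
proof -
  define \<beta> where "\<beta> = 2 / (2 - \<alpha>)"
  have \<beta>: "\<beta> > 0" unfolding \<beta>_def using \<alpha> by auto
  define \<kappa> where "\<kappa> = \<beta> / 2 * (2 * K) powr (- \<beta>)"
  have \<kappa>: "\<kappa> > 0" unfolding \<kappa>_def using \<beta> K by auto
  have Dlow: "Dn s \<ge> Y s / 4 * (Y s / (2 * K)) powr \<beta>" if s: "s > 0" and big: "Y s > 8 * K" for s
  proof -
    define y where "y = Y s"
    have y: "y > 0" using big K unfolding y_def by auto
    define r where "r = (2 * K / y) powr (1 / (2 - \<alpha>))"
    have r0: "r > 0" unfolding r_def using K y by auto
    have rp: "r powr (2 - \<alpha>) = 2 * K / y"
      unfolding r_def using \<alpha> K y by (simp add: powr_powr)
    have "2 * K / y < 1/4" using big K unfolding y_def by (simp add: field_simps)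
    also have "(1/4::real) \<le> (1/2) powr (2 - \<alpha>)"
    proof -
      have "(1/2::real) powr 2 \<le> (1/2) powr (2 - \<alpha>)" using \<alpha> by (intro powr_mono') auto
      thus ?thesis by (simp add: powr_realpow[of "1/2" 2, simplified] power2_eq_square)
    qed
    finally have "r powr (2 - \<alpha>) < (1/2) powr (2 - \<alpha>)" using rp by simp
    hence rh: "r < 1/2" using \<alpha> r0 by (meson powr_less_cancel2 less_eq_real_def zero_less_divide_iff zero_less_numeral zero_less_one diff_gt_0_iff_gt)
    have "r powr (\<alpha> - 2) = 1 / r powr (2 - \<alpha>)" using powr_minus_divide[of r "2 - \<alpha>"] by simp
    hence "K * r powr (\<alpha> - 2) = K / r powr (2 - \<alpha>)" by simp
    also have "\<dots> = y / 2" using rp K y by simp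
    finally have "y \<le> y / 2 + 2 * r\<^sup>2 * Dn s" using key[OF s r0 rh] unfolding y_def by simp
    hence "y / 4 \<le> r\<^sup>2 * Dn s" by simp
    hence "y / 4 / r\<^sup>2 \<le> Dn s" using r0 by (simp add: field_simps)
    moreover have "r\<^sup>2 = (2 * K / y) powr \<beta>"
    proof -
      have "r\<^sup>2 = r powr 2" using r0 by (simp add: powr_realpow[of r 2, simplified])
      also have "\<dots> = (2 * K / y) powr \<beta>" unfolding r_def \<beta>_def by (simp add: powr_powr)
      finally show ?thesis .
    qed
    moreover have "(2 * K / y) powr \<beta> = 1 / (y / (2 * K)) powr \<beta>"
      using K y by (simp add: powr_divide)
    ultimately show ?thesis unfolding y_def by (simp add: field_simps)
  qed
  define Y1 where "Y1 = 8 * K"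
  define C1 where "C1 = max Y1 ((\<kappa> / 2) powr (- ((2 - \<alpha>) / 2)))"
  have C1: "C1 > 0" unfolding C1_def Y1_def using K by auto
  have C1eq: "C1 = ca K \<alpha>" unfolding C1_def ca_def Y1_def \<kappa>_def \<beta>_def by simp
  show ?thesis unfolding C1eq[symmetric]
  proof (intro conjI allI impI C1)
    fix t assume t: "t > 0" and nt: "\<nu> * t < 1"
    have pw: "(\<nu> * t) powr ((2 - \<alpha>) / 2) > 0" "(\<nu> * t) powr ((2 - \<alpha>) / 2) \<le> 1"
      using \<nu> t nt \<alpha> by (auto intro!: powr_le1)
    show "Y t \<le> C1 / (\<nu> * t) powr ((2 - \<alpha>) / 2)"
    proof (cases "Y t > Y1")
      case False
      hence "Y t \<le> Y1" by simp
      also have "Y1 \<le> C1" unfolding C1_def by simp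
      also have "C1 \<le> C1 / (\<nu> * t) powr ((2 - \<alpha>) / 2)"
        using pw C1 by (simp add: field_simps)
      finally show ?thesis .
    next
      case True
      have bigs: "Y s > Y1" if "s \<in> {t/2..t}" for s
      proof -
        have "Y t \<le> Y s" using that t
          by (intro Y_mono[OF dY]) (use \<nu> Dn0 in \<open>auto intro!: mult_nonneg_nonneg\<close>)
        thus ?thesis using True by simp
      qed
      have Yp: "Y s > 0" if "s \<in> {t/2..t}" for s using bigs[OF that] K unfolding Y1_def by simp
      define Z where "Z = (\<lambda>s. Y s powr (- \<beta>))"
      define Z' where "Z' = (\<lambda>s. - \<beta> * Y s powr (- \<beta> - 1) * (- 2 * \<nu> * Dn s))"
      have dZ: "(Z has_real_derivative Z' s) (at s)" if "s \<in> {t/2..t}" for s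
        unfolding Z_def Z'_def using DERIV_fun_powr[OF dY Yp[OF that], of "- \<beta>"] that t by simp
      have cZ: "Z' s \<ge> \<kappa> * \<nu>" if "s \<in> {t/2..t}" for s
      proof -
        have s0: "s > 0" using that t by auto
        have ys: "Y s > 0" using Yp[OF that] .
        have "Z' s = 2 * \<beta> * \<nu> * Y s powr (- \<beta> - 1) * Dn s" unfolding Z'_def by simp
        also have "\<dots> \<ge> 2 * \<beta> * \<nu> * Y s powr (- \<beta> - 1) * (Y s / 4 * (Y s / (2 * K)) powr \<beta>)"
          using Dlow[OF s0] bigs[OF that] \<beta> \<nu> unfolding Y1_def by (intro mult_left_mono) auto
        also have "2 * \<beta> * \<nu> * Y s powr (- \<beta> - 1) * (Y s / 4 * (Y s / (2 * K)) powr \<beta>) = \<kappa> * \<nu>"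
        proof -
          have "Y s powr (- \<beta> - 1) * Y s * (Y s) powr \<beta> = 1"
            using ys by (simp add: powr_add[symmetric] powr_diff powr_minus_divide field_simps)
          moreover have "(Y s / (2 * K)) powr \<beta> = Y s powr \<beta> * (2 * K) powr (- \<beta>)"
            using ys K by (simp add: powr_divide powr_minus_divide)
          ultimately show ?thesis unfolding \<kappa>_def by (simp add: field_simps)
        qed
        finally show ?thesis .
      qed
      have "Z t \<ge> \<kappa> * \<nu> * t / 2"
        by (rule ode_growth[OF t dZ cZ]) (auto simp: Z_def)
      hence Zt: "Y t powr (- \<beta>) \<ge> \<kappa> / 2 * (\<nu> * t)" unfolding Z_def by (simp add: field_simps)
      have yt: "Y t > 0" using Yp[of t] t by auto
      have e1: "(- \<beta>) * (- ((2 - \<alpha>) / 2)) = 1" using \<alpha> unfolding \<beta>_def by (simp add: field_simps)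
      have "Y t = (Y t powr (- \<beta>)) powr (- ((2 - \<alpha>) / 2))"
        using yt unfolding powr_powr e1 by simp
      also have "\<dots> \<le> (\<kappa> / 2 * (\<nu> * t)) powr (- ((2 - \<alpha>) / 2))"
        using Zt \<kappa> \<nu> t \<alpha> by (intro powr_mono2') auto
      also have "\<dots> = (\<kappa> / 2) powr (- ((2 - \<alpha>) / 2)) / (\<nu> * t) powr ((2 - \<alpha>) / 2)"
        using \<kappa> \<nu> t by (simp add: powr_mult[of "\<kappa>/2" "\<nu> * t", symmetric] powr_minus_divide)
      also have "\<dots> \<le> C1 / (\<nu> * t) powr ((2 - \<alpha>) / 2)"
        unfolding C1_def using pw by (intro divide_right_mono) auto
      finally show ?thesis .
    qed
  qed
qed

lemma ssqrt_bound:
  fixes s :: real assumes "0 < s" "s < 1"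
  shows "0 < s * sqrt (- ln s)" "s * sqrt (- ln s) \<le> sqrt s" "sqrt s \<le> 1"
proof -
  have l: "- ln s > 0" using assms by simp
  show "0 < s * sqrt (- ln s)" using assms l by simp
  have "- ln s = ln (1/s)" using assms by (simp add: ln_div)
  also have "\<dots> \<le> 1/s - 1" using assms by (intro ln_le_minus_one) auto
  also have "\<dots> \<le> 1/s" by simp
  finally have "sqrt (- ln s) \<le> sqrt (1/s)" by simp
  hence "s * sqrt (- ln s) \<le> s * sqrt (1/s)" using assms by (intro mult_left_mono) auto
  also have "s * sqrt (1/s) = sqrt s" using assms
    by (simp add: real_sqrt_divide real_div_sqrt)
  finally show "s * sqrt (- ln s) \<le> sqrt s" .
  show "sqrt s \<le> 1" using assms by simp
qed

lemma final_b:
  fixes y s A :: real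
  assumes s: "0 < s" "s < 1" and A: "A > 0" and y: "y \<ge> exp 1" and ya: "y * sqrt (ln y) \<le> A / s"
  shows "y \<le> (2 * A + 1) / (s * sqrt (- ln s))"
proof (rule ccontr)
  assume "\<not> ?thesis"
  hence big: "y > (2 * A + 1) / (s * sqrt (- ln s))" by simp
  note ss = ssqrt_bound[OF s]
  have l0: "- ln s > 0" using s by simp
  have "(2 * A + 1) / (s * sqrt (- ln s)) \<ge> (2 * A + 1) / sqrt s"
    using ss A s by (intro divide_left_mono mult_pos_pos) auto
  also have "(2 * A + 1) / sqrt s \<ge> 1 / sqrt s" using A s by (intro divide_right_mono) auto
  finally have y1: "y > 1 / sqrt s" using big by simp
  have p1: "0 < 1 / sqrt s" using s by simp
  have y0: "0 < y" using y1 p1 by linarith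
  have "ln y > ln (1 / sqrt s)" using ln_less_cancel_iff[OF p1 y0] y1 by simp
  also have "ln (1 / sqrt s) = - ln s / 2" using s by (simp add: ln_div ln_sqrt)
  finally have ly: "ln y > - ln s / 2" .
  hence "sqrt (ln y) > sqrt (- ln s / 2)" by simp
  also have "sqrt (- ln s / 2) = sqrt (- ln s) / sqrt 2" by (rule real_sqrt_divide)
  finally have sy: "sqrt (ln y) > sqrt (- ln s) / sqrt 2" .
  have f1: "y * sqrt (ln y) > (2 * A + 1) / (s * sqrt (- ln s)) * (sqrt (- ln s) / sqrt 2)"
    using big sy ss l0 A y0 by (intro mult_strict_mono) auto
  have f2: "(2 * A + 1) / (s * sqrt (- ln s)) * (sqrt (- ln s) / sqrt 2) = (2 * A + 1) / (s * sqrt 2)"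
    using l0 s by (simp add: field_simps)
  have f3: "(2 * A + 1) / (s * sqrt 2) \<ge> A / s"
  proof -
    have "sqrt 2 \<le> sqrt (2\<^sup>2)" by (intro real_sqrt_le_mono) simp
    hence "sqrt 2 \<le> 2" by simp
    hence "A * sqrt 2 \<le> A * 2" using A by (intro mult_left_mono) auto
    hence "A * sqrt 2 \<le> 2 * A + 1" by simp
    thus ?thesis using s by (simp add: field_simps)
  qed
  show False using f1 f2 f3 ya by linarith
qed

lemma G_deriv:
  fixes y :: real assumes "y > 1"
  shows "((\<lambda>y. 1 / (y * sqrt (ln y))) has_real_derivative
     - (1 / (y\<^sup>2 * sqrt (ln y))) * (1 + 1 / (2 * ln y))) (at y)"
proof -
  have l: "ln y > 0" using assms by simp
  have "((\<lambda>y. 1 / (y * sqrt (ln y))) has_real_derivative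
     - (1 * sqrt (ln y) + y * (inverse y / (2 * sqrt (ln y)))) / (y * sqrt (ln y))\<^sup>2) (at y)"
    using assms l by (auto intro!: derivative_eq_intros simp: power2_eq_square inverse_eq_divide)
  moreover have "- (1 * sqrt (ln y) + y * (inverse y / (2 * sqrt (ln y)))) / (y * sqrt (ln y))\<^sup>2
      = - (1 / (y\<^sup>2 * sqrt (ln y))) * (1 + 1 / (2 * ln y))"
  proof -
    have sq: "sqrt (ln y) * sqrt (ln y) = ln y" using l by simp
    have "- (1 * sqrt (ln y) + y * (inverse y / (2 * sqrt (ln y)))) / (y * sqrt (ln y))\<^sup>2
        = - (sqrt (ln y) + 1 / (2 * sqrt (ln y))) / (y\<^sup>2 * ln y)"
      using assms l by (simp add: power_mult_distrib field_simps)
    also have "\<dots> = - (1 / (y\<^sup>2 * sqrt (ln y))) * (1 + 1 / (2 * ln y))"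
      using assms l sq by (simp add: field_simps)
    finally show ?thesis .
  qed
  ultimately show ?thesis by (simp only:)
qed

definition cb :: "real \<Rightarrow> real" where
  "cb K = max (max (exp 1) (16 * K\<^sup>2 + 16 * K + 1)) (2 * (16 * K) + 1)"

lemma ode_b:
  fixes Y Dn :: "real \<Rightarrow> real"
  assumes \<nu>: "\<nu> > 0" and K: "K > 0"
    and dY: "\<And>s. s > 0 \<Longrightarrow> (Y has_real_derivative - 2 * \<nu> * Dn s) (at s)"
    and Dn0: "\<And>s. s > 0 \<Longrightarrow> Dn s \<ge> 0"
    and key: "\<And>s r. s > 0 \<Longrightarrow> 0 < r \<Longrightarrow> r < 1/2 \<Longrightarrow> Y s \<le> K / (r\<^sup>2 * sqrt (- ln r)) + 2 * r\<^sup>2 * Dn s"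
  shows "cb K > 0 \<and> (\<forall>t>0. \<nu> * t < 1 \<longrightarrow> Y t \<le> cb K / (\<nu> * t * sqrt (- ln (\<nu> * t))))"
proof -
  define Y1 where "Y1 = max (exp 1) (16 * K\<^sup>2 + 16 * K + 1)"
  have Dlow: "Dn s \<ge> (Y s)\<^sup>2 * sqrt (ln (Y s)) / (16 * K)" if s: "s > 0" and big: "Y s > Y1" for s
  proof -
    define y where "y = Y s"
    define L where "L = ln y"
    have ye: "y > exp 1" "y > 16 * K\<^sup>2 + 16 * K + 1" using big unfolding y_def Y1_def by auto
    have y0: "y > 0" using ye(1) by (meson exp_gt_zero less_trans)
    have L1: "L > 1" unfolding L_def using ye(1) y0 by (metis ln_exp ln_less_cancel_iff exp_gt_zero)
    have sL: "sqrt L \<ge> 1" using L1 by simp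
    define \<rho> where "\<rho> = 4 * K / (y * sqrt L)"
    have yL: "y * sqrt L \<ge> y" using sL y0 by simp
    have \<rho>0: "\<rho> > 0" unfolding \<rho>_def using K y0 L1 by simp
    have \<rho>q: "\<rho> < 1/4"
    proof -
      have "16 * K < y * sqrt L" using yL ye(2) K by (smt (verit) zero_le_power2)
      thus ?thesis unfolding \<rho>_def using K y0 L1 by (simp add: field_simps)
    qed
    define r where "r = sqrt \<rho>"
    have r0: "r > 0" unfolding r_def using \<rho>0 by simp
    have r2: "r\<^sup>2 = \<rho>" unfolding r_def using \<rho>0 by simp
    have rh: "r < 1/2" unfolding r_def using \<rho>q \<rho>0
      by (metis real_sqrt_less_iff real_sqrt_divide real_sqrt_one real_sqrt_four) 
    have lnr: "- ln r = ln (y * sqrt L / (4 * K)) / 2"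
    proof -
      have "ln \<rho> = 2 * ln r" using r2 r0 by (metis ln_realpow of_nat_numeral)
      moreover have "ln \<rho> = - ln (y * sqrt L / (4 * K))"
        unfolding \<rho>_def using K y0 L1 by (simp add: ln_div)
      ultimately show ?thesis by simp
    qed
    have Lle: "L \<le> 4 * (- ln r)"
    proof -
      have "y * L \<ge> 16 * K\<^sup>2" using ye(2) L1 y0 K
        by (smt (verit) mult_left_mono mult_cancel_left1 zero_le_power2)
      hence "y * (16 * K\<^sup>2) \<le> y * (y * L)" using y0 by (intro mult_left_mono) auto
      hence "y \<le> (y * sqrt L / (4 * K))\<^sup>2"
        using y0 K L1 by (simp add: power_mult_distrib power_divide field_simps power2_eq_square)
      hence "ln y \<le> ln ((y * sqrt L / (4 * K))\<^sup>2)" using y0 by (metis ln_le_cancel_iff less_le_trans)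
      also have "\<dots> = 2 * ln (y * sqrt L / (4 * K))"
        using y0 K L1 by (simp add: ln_realpow)
      finally show ?thesis unfolding L_def[symmetric] lnr by simp
    qed
    have lr0: "- ln r > 0" using rh r0 by simp
    have "K / (r\<^sup>2 * sqrt (- ln r)) \<le> y / 2"
    proof -
      have "sqrt L \<le> sqrt (4 * (- ln r))" using Lle by simp
      also have "sqrt (4 * (- ln r)) = sqrt 4 * sqrt (- ln r)" by (rule real_sqrt_mult)
      also have "sqrt 4 = (2::real)" by (metis real_sqrt_four)
      finally have sq: "sqrt L \<le> 2 * sqrt (- ln r)" .
      have "K / (r\<^sup>2 * sqrt (- ln r)) = y * sqrt L / (4 * sqrt (- ln r))"
        unfolding r2 \<rho>_def using K y0 L1 lr0 by (simp add: field_simps)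
      also have "\<dots> \<le> y * (2 * sqrt (- ln r)) / (4 * sqrt (- ln r))"
        using sq y0 lr0 by (intro divide_right_mono mult_left_mono) auto
      also have "\<dots> = y / 2" using lr0 by simp
      finally show ?thesis .
    qed
    moreover have "y \<le> K / (r\<^sup>2 * sqrt (- ln r)) + 2 * r\<^sup>2 * Dn s" using key[OF s r0 rh] unfolding y_def .
    ultimately have "y \<le> y / 2 + 2 * \<rho> * Dn s" unfolding r2 by linarith
    hence "y / (4 * \<rho>) \<le> Dn s" using \<rho>0 by (simp add: field_simps)
    moreover have "y / (4 * \<rho>) = y\<^sup>2 * sqrt L / (16 * K)"
      unfolding \<rho>_def using K y0 L1 by (simp add: field_simps power2_eq_square)
    ultimately show ?thesis unfolding y_def L_def by simp
  qed
  define C1 where "C1 = max Y1 (2 * (16 * K) + 1)"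
  have Y1p: "Y1 > 0" unfolding Y1_def by (simp add: less_max_iff_disj)
  have C1: "C1 > 0" unfolding C1_def using Y1p by simp
  have C1eq: "C1 = cb K" unfolding C1_def cb_def Y1_def by simp
  show ?thesis unfolding C1eq[symmetric]
  proof (intro conjI allI impI C1)
    fix t assume t: "t > 0" and nt: "\<nu> * t < 1"
    have st: "0 < \<nu> * t" using \<nu> t by simp
    note ss = ssqrt_bound[OF st nt]
    have le1: "\<nu> * t * sqrt (- ln (\<nu> * t)) \<le> 1" using ss(2) ss(3) by linarith
    show "Y t \<le> C1 / (\<nu> * t * sqrt (- ln (\<nu> * t)))"
    proof (cases "Y t > Y1")
      case False
      hence "Y t \<le> Y1" by simp
      also have "Y1 \<le> C1" unfolding C1_def by simp
      also have "C1 \<le> C1 / (\<nu> * t * sqrt (- ln (\<nu> * t)))"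
        using le1 ss(1) C1 by (simp add: le_divide_eq)
      finally show ?thesis .
    next
      case True
      have bigs: "Y s > Y1" if "s \<in> {t/2..t}" for s
      proof -
        have "Y t \<le> Y s" using that t
          by (intro Y_mono[OF dY]) (use \<nu> Dn0 in \<open>auto intro!: mult_nonneg_nonneg\<close>)
        thus ?thesis using True by simp
      qed
      have Y1e: "Y1 \<ge> exp 1" unfolding Y1_def by simp
      have Yg1: "Y s > 1" if "s \<in> {t/2..t}" for s
        using bigs[OF that] Y1e by (smt (verit) one_less_exp_iff)
      define Z where "Z = (\<lambda>s. 1 / (Y s * sqrt (ln (Y s))))"
      define Z' where "Z' = (\<lambda>s. - (1 / ((Y s)\<^sup>2 * sqrt (ln (Y s)))) * (1 + 1 / (2 * ln (Y s))) * (- 2 * \<nu> * Dn s))"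
      have dZ: "(Z has_real_derivative Z' s) (at s)" if "s \<in> {t/2..t}" for s
        unfolding Z_def Z'_def using DERIV_chain2[OF G_deriv[OF Yg1[OF that]] dY[of s]] that t by simp
      have cZ: "Z' s \<ge> \<nu> / (8 * K)" if "s \<in> {t/2..t}" for s
      proof -
        have s0: "s > 0" using that t by auto
        define y where "y = Y s"
        have y1: "y > 1" using Yg1[OF that] unfolding y_def .
        have l: "ln y > 0" using y1 by simp
        have D: "Dn s \<ge> y\<^sup>2 * sqrt (ln y) / (16 * K)" using Dlow[OF s0 bigs[OF that]] unfolding y_def .
        have "Z' s = (2 * \<nu> * Dn s) / (y\<^sup>2 * sqrt (ln y)) * (1 + 1 / (2 * ln y))"
          unfolding Z'_def y_def by simp
        also have "\<dots> \<ge> (2 * \<nu> * Dn s) / (y\<^sup>2 * sqrt (ln y))"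
        proof -
          have "0 \<le> (2 * \<nu> * Dn s) / (y\<^sup>2 * sqrt (ln y))" using \<nu> Dn0[OF s0] y1 by simp
          moreover have "1 \<le> 1 + 1 / (2 * ln y)" using l by simp
          ultimately show ?thesis by (metis mult_left_mono mult_1_right)
        qed
        finally have z1: "Z' s \<ge> (2 * \<nu> * Dn s) / (y\<^sup>2 * sqrt (ln y))" .
        have z2: "(2 * \<nu> * (y\<^sup>2 * sqrt (ln y) / (16 * K))) / (y\<^sup>2 * sqrt (ln y)) \<le> (2 * \<nu> * Dn s) / (y\<^sup>2 * sqrt (ln y))"
          using D \<nu> l y1 by (intro divide_right_mono mult_left_mono) auto
        have z3: "(2 * \<nu> * (y\<^sup>2 * sqrt (ln y) / (16 * K))) / (y\<^sup>2 * sqrt (ln y)) = \<nu> / (8 * K)"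
          using l y1 K by (simp add: field_simps)
        show ?thesis using z1 z2 z3 by linarith
      qed
      have "Z t \<ge> \<nu> / (8 * K) * t / 2"
        by (rule ode_growth[OF t dZ cZ]) (use Yg1[of "t/2"] t in \<open>auto simp: Z_def\<close>)
      hence Zt: "1 / (Y t * sqrt (ln (Y t))) \<ge> \<nu> * t / (16 * K)" unfolding Z_def by (simp add: field_simps)
      have yt1: "Y t > 1" using Yg1[of t] t by auto
      have pos: "Y t * sqrt (ln (Y t)) > 0" using yt1 by simp
      have "Y t * sqrt (ln (Y t)) \<le> 16 * K / (\<nu> * t)"
        using Zt pos st K by (simp add: field_simps)
      hence "Y t \<le> (2 * (16 * K) + 1) / (\<nu> * t * sqrt (- ln (\<nu> * t)))"
        using True Y1e K by (intro final_b[OF st nt]) auto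
      also have "\<dots> \<le> C1 / (\<nu> * t * sqrt (- ln (\<nu> * t)))"
        unfolding C1_def using ss by (intro divide_right_mono) auto
      finally show ?thesis .
    qed
  qed
qed

lemma NS_basic:
  assumes sol: "NS_sol \<nu> u0 u om" and t: "t > 0"
  shows "integral (cbox (0,0) (1,1)) (\<lambda>x. (om (x,t))\<^sup>2) \<ge> 0"
    "integral (cbox (0,0) (1,1)) (\<lambda>x. (dds [((1,0),0)] om (x,t))\<^sup>2 + (dds [((0,1),0)] om (x,t))\<^sup>2) \<ge> 0"
    "L2sq om t = ennreal (integral (cbox (0,0) (1,1)) (\<lambda>x. (om (x,t))\<^sup>2))"
proof -
  note N = NS_unfold[OF sol]
  note S0 = smooth_slices[OF N(1), of "[]", simplified, OF t]
  note S1 = smooth_slices[OF N(1), of "[((1,0),0)]", simplified, OF basis3(1) t]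
  note S2 = smooth_slices[OF N(1), of "[((0,1),0)]", simplified, OF basis3(2) t]
  show "integral (cbox (0,0) (1,1)) (\<lambda>x. (om (x,t))\<^sup>2) \<ge> 0"
    by (rule integral_nonneg) (auto intro!: cintU continuous_intros S0)
  show "integral (cbox (0,0) (1,1)) (\<lambda>x. (dds [((1,0),0)] om (x,t))\<^sup>2 + (dds [((0,1),0)] om (x,t))\<^sup>2) \<ge> 0"
    by (rule integral_nonneg) (auto intro!: cintU continuous_intros S1 S2)
  show "L2sq om t = ennreal (integral (cbox (0,0) (1,1)) (\<lambda>x. (om (x,t))\<^sup>2))"
    unfolding L2sq_def cellQ_def by (rule nn_cont) (auto intro!: continuous_intros S0)
qed

lemma nn_powr_int:
  fixes c \<gamma> T :: real
  assumes "0 \<le> \<gamma>" "\<gamma> < 1" "T > 0" "c \<ge> 0"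
  shows "(\<integral>\<^sup>+ \<tau>\<in>{0<..<T}. ennreal (c * \<tau> powr (- \<gamma>)) \<partial>lborel) \<le> ennreal (c * (T powr (1 - \<gamma>) / (1 - \<gamma>)))"
proof -
  have hi: "((\<lambda>x. c * x powr (- \<gamma>)) has_integral c * (T powr (- \<gamma> + 1) / (- \<gamma> + 1))) {0..T}"
    using assms by (intro has_integral_mult_right has_integral_powr_from_0) auto
  have "(\<integral>\<^sup>+ \<tau>\<in>{0<..<T}. ennreal (c * \<tau> powr (- \<gamma>)) \<partial>lborel) \<le> (\<integral>\<^sup>+ \<tau>. ennreal (c * \<tau> powr (- \<gamma>)) * indicator {0..T} \<tau> \<partial>lborel)"
    by (intro nn_integral_mono) (auto split: split_indicator)
  also have "\<dots> = ennreal (c * (T powr (- \<gamma> + 1) / (- \<gamma> + 1)))"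
    by (rule nn_integral_has_integral_lebesgue'[OF _ hi]) (use assms in auto)
  finally show ?thesis by simp
qed

lemma nn_inv_int:
  fixes c \<delta> T :: real
  assumes "0 < \<delta>" "\<delta> < T" "c \<ge> 0"
  shows "(\<integral>\<^sup>+ \<tau>\<in>{\<delta><..<T}. ennreal (c * (1 / \<tau>)) \<partial>lborel) \<le> ennreal (c * (ln T - ln \<delta>))"
proof -
  have h1: "((\<lambda>x. 1 / x) has_integral (ln T - ln \<delta>)) {\<delta>..T}"
  proof (rule fundamental_theorem_of_calculus)
    show "\<delta> \<le> T" using assms by simp
    fix x assume "x \<in> {\<delta>..T}"
    hence "x > 0" using assms by auto
    thus "(ln has_vector_derivative 1 / x) (at x within {\<delta>..T})"
      using DERIV_ln_divide[of x] by (auto intro!: has_vector_derivative_at_within has_field_derivative_at_within simp: has_real_derivative_iff_has_vector_derivative[symmetric])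
  qed
  have hi: "((\<lambda>x. c * (1 / x)) has_integral c * (ln T - ln \<delta>)) {\<delta>..T}"
    by (intro has_integral_mult_right h1)
  have "(\<integral>\<^sup>+ \<tau>\<in>{\<delta><..<T}. ennreal (c * (1 / \<tau>)) \<partial>lborel) \<le> (\<integral>\<^sup>+ \<tau>. ennreal (c * (1 / \<tau>)) * indicator {\<delta>..T} \<tau> \<partial>lborel)"
    by (intro nn_integral_mono) (auto split: split_indicator)
  also have "\<dots> = ennreal (c * (ln T - ln \<delta>))"
    by (rule nn_integral_has_integral_lebesgue'[OF _ hi]) (use assms in auto)
  finally show ?thesis .
qed

lemma partA:
  fixes u0 :: "real \<Rightarrow> real \<times> real \<Rightarrow> real \<times> real"
    and u :: "real \<Rightarrow> (real \<times> real) \<times> real \<Rightarrow> real \<times> real"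
    and om :: "real \<Rightarrow> (real \<times> real) \<times> real \<Rightarrow> real"
  assumes sol: "\<And>\<nu>. \<nu> > 0 \<Longrightarrow> NS_sol \<nu> (u0 \<nu>) (u \<nu>) (om \<nu>)"
    and \<alpha>: "0 < \<alpha>" "\<alpha> < 2" and C: "C > 0"
    and H: "\<forall>r>0. \<forall>x \<nu> t. \<nu> > 0 \<and> t > 0 \<longrightarrow> ball_mass (om \<nu>) t x r \<le> ennreal (C * r powr \<alpha>)"
  shows "\<exists>C'>0. \<forall>\<nu> t T. \<nu> > 0 \<and> t > 0 \<and> T > 0 \<and> \<nu> * t < 1 \<and> \<nu> * T < 1 \<longrightarrow>
          L2sq (om \<nu>) t \<le> ennreal (C' / (\<nu> * t) powr ((2 - \<alpha>) / 2)) \<and>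
          ennreal \<nu> * (\<integral>\<^sup>+ \<tau>\<in>{0<..<T}. L2sq (om \<nu>) \<tau> \<partial>lborel)
            \<le> ennreal (C' * (\<nu> * T) powr (\<alpha> / 2))"
proof -
  define K where "K = 4 * C * (9 * (C * (1/3) powr \<alpha>))"
  have K: "K > 0" unfolding K_def using C by simp
  define \<gamma> where "\<gamma> = (2 - \<alpha>) / 2"
  have \<gamma>: "0 \<le> \<gamma>" "\<gamma> < 1" "1 - \<gamma> = \<alpha> / 2" unfolding \<gamma>_def using \<alpha> by (auto simp: field_simps)
  have ODE: "ca K \<alpha> > 0 \<and> (\<forall>t>0. \<nu> * t < 1 \<longrightarrow>
      integral (cbox (0,0) (1,1)) (\<lambda>x. (om \<nu> (x,t))\<^sup>2) \<le> ca K \<alpha> / (\<nu> * t) powr ((2 - \<alpha>) / 2))"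
    if \<nu>: "\<nu> > 0" for \<nu>
  proof (rule ode_a[OF \<nu> \<alpha> K])
    note S = sol[OF \<nu>]
    show "\<And>s. s > 0 \<Longrightarrow> ((\<lambda>s. integral (cbox (0,0) (1,1)) (\<lambda>x. (om \<nu> (x,s))\<^sup>2)) has_real_derivative
      - 2 * \<nu> * integral (cbox (0,0) (1,1)) (\<lambda>x. (dds [((1,0),0)] (om \<nu>) (x,s))\<^sup>2 + (dds [((0,1),0)] (om \<nu>) (x,s))\<^sup>2)) (at s)"
      by (rule NS_energy[OF S])
    show "\<And>s. s > 0 \<Longrightarrow> 0 \<le> integral (cbox (0,0) (1,1)) (\<lambda>x. (dds [((1,0),0)] (om \<nu>) (x,s))\<^sup>2 + (dds [((0,1),0)] (om \<nu>) (x,s))\<^sup>2)"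
      by (rule NS_basic(2)[OF S])
    show "\<And>s. s > 0 \<Longrightarrow> 0 \<le> integral (cbox (0,0) (1,1)) (\<lambda>x. (om \<nu> (x,s))\<^sup>2)"
      by (rule NS_basic(1)[OF S])
    fix s r :: real assume s: "s > 0" and r: "0 < r" "r < 1/2"
    have "integral (cbox (0,0) (1,1)) (\<lambda>x. (om \<nu> (x,s))\<^sup>2)
     \<le> 4 * (C * r powr \<alpha>) * (9 * (C * (1/3) powr \<alpha>)) / r\<^sup>2
       + 2 * r\<^sup>2 * integral (cbox (0,0) (1,1)) (\<lambda>x. (dds [((1,0),0)] (om \<nu>) (x,s))\<^sup>2 + (dds [((0,1),0)] (om \<nu>) (x,s))\<^sup>2)"
    proof (rule NS_key[OF S s, where B="\<lambda>r. C * r powr \<alpha>"])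
      show "\<And>r x. 0 < r \<Longrightarrow> r < 1/2 \<Longrightarrow> ball_mass (om \<nu>) s x r \<le> ennreal (C * r powr \<alpha>)"
        using H \<nu> s by blast
      show "\<And>r. 0 < r \<Longrightarrow> r < 1/2 \<Longrightarrow> 0 \<le> C * r powr \<alpha>" using C by simp
    qed (use r in auto)
    moreover have "4 * (C * r powr \<alpha>) * (9 * (C * (1/3) powr \<alpha>)) / r\<^sup>2 = K * r powr (\<alpha> - 2)"
      unfolding K_def using r by (simp add: powr_diff powr_realpow[of r 2, simplified])
    ultimately show "integral (cbox (0,0) (1,1)) (\<lambda>x. (om \<nu> (x,s))\<^sup>2)
     \<le> K * r powr (\<alpha> - 2) + 2 * r\<^sup>2 * integral (cbox (0,0) (1,1)) (\<lambda>x. (dds [((1,0),0)] (om \<nu>) (x,s))\<^sup>2 + (dds [((0,1),0)] (om \<nu>) (x,s))\<^sup>2)"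
      by simp
  qed
  define ck where "ck = ca K \<alpha>"
  have ck: "ck > 0" using ODE[of 1] unfolding ck_def by simp
  define C' where "C' = ck * (1 + 2 / \<alpha>)"
  have C': "C' > 0" unfolding C'_def using ck \<alpha> by (intro mult_pos_pos add_pos_pos) auto
  show ?thesis
  proof (intro exI[of _ C'] conjI allI impI C')
    fix \<nu> t T :: real assume A: "\<nu> > 0 \<and> t > 0 \<and> T > 0 \<and> \<nu> * t < 1 \<and> \<nu> * T < 1"
    hence \<nu>: "\<nu> > 0" and t: "t > 0" and T: "T > 0" and nt: "\<nu> * t < 1" and nT: "\<nu> * T < 1" by auto
    have bound: "L2sq (om \<nu>) \<tau> \<le> ennreal (ck / (\<nu> * \<tau>) powr \<gamma>)" if "\<tau> > 0" "\<nu> * \<tau> < 1" for \<tau>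
      using ODE[OF \<nu>] NS_basic(3)[OF sol[OF \<nu>] that(1)] that unfolding ck_def \<gamma>_def by simp
    have "ennreal (ck / (\<nu> * t) powr \<gamma>) \<le> ennreal (C' / (\<nu> * t) powr \<gamma>)"
      unfolding C'_def using ck \<alpha> \<nu> t by (intro ennreal_leI divide_right_mono) (auto simp: field_simps)
    thus "L2sq (om \<nu>) t \<le> ennreal (C' / (\<nu> * t) powr ((2 - \<alpha>) / 2))"
      using bound[OF t nt] unfolding \<gamma>_def by simp
    have "(\<integral>\<^sup>+ \<tau>\<in>{0<..<T}. L2sq (om \<nu>) \<tau> \<partial>lborel) \<le> (\<integral>\<^sup>+ \<tau>\<in>{0<..<T}. ennreal ((ck * \<nu> powr (- \<gamma>)) * \<tau> powr (- \<gamma>)) \<partial>lborel)"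
    proof (intro nn_integral_mono)
      fix \<tau>
      show "L2sq (om \<nu>) \<tau> * indicator {0<..<T} \<tau> \<le> ennreal ((ck * \<nu> powr (- \<gamma>)) * \<tau> powr (- \<gamma>)) * indicator {0<..<T} \<tau>"
      proof (cases "\<tau> \<in> {0<..<T}")
        case True
        hence \<tau>: "\<tau> > 0" "\<nu> * \<tau> < 1" using nT \<nu> by (auto, smt (verit) mult_strict_left_mono)
        have "ck / (\<nu> * \<tau>) powr \<gamma> = (ck * \<nu> powr (- \<gamma>)) * \<tau> powr (- \<gamma>)"
          using \<nu> \<tau> by (simp add: powr_mult powr_minus_divide)
        thus ?thesis using bound[OF \<tau>] True by simp
      qed simp
    qed
    also have "\<dots> \<le> ennreal ((ck * \<nu> powr (- \<gamma>)) * (T powr (1 - \<gamma>) / (1 - \<gamma>)))"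
      using \<gamma> T ck by (intro nn_powr_int) auto
    finally have I: "ennreal \<nu> * (\<integral>\<^sup>+ \<tau>\<in>{0<..<T}. L2sq (om \<nu>) \<tau> \<partial>lborel)
        \<le> ennreal \<nu> * ennreal ((ck * \<nu> powr (- \<gamma>)) * (T powr (1 - \<gamma>) / (1 - \<gamma>)))"
      by (intro mult_left_mono) auto
    also have "\<dots> = ennreal (\<nu> * ((ck * \<nu> powr (- \<gamma>)) * (T powr (1 - \<gamma>) / (1 - \<gamma>))))"
      by (rule ennreal_mult'[symmetric]) (use \<nu> in simp)
    also have "\<nu> * ((ck * \<nu> powr (- \<gamma>)) * (T powr (1 - \<gamma>) / (1 - \<gamma>))) = ck * (2 / \<alpha>) * (\<nu> * T) powr (\<alpha> / 2)"
    proof -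
      have "\<nu> * \<nu> powr (- \<gamma>) = \<nu> powr (1 - \<gamma>)"
        using \<nu> by (simp add: powr_diff powr_minus_divide)
      thus ?thesis unfolding \<gamma>(3) using \<nu> T \<alpha> by (simp add: powr_mult field_simps)
    qed
    also have "ennreal (ck * (2 / \<alpha>) * (\<nu> * T) powr (\<alpha> / 2)) \<le> ennreal (C' * (\<nu> * T) powr (\<alpha> / 2))"
      unfolding C'_def using ck \<alpha> by (intro ennreal_leI mult_right_mono) (auto simp: field_simps)
    finally show "ennreal \<nu> * (\<integral>\<^sup>+ \<tau>\<in>{0<..<T}. L2sq (om \<nu>) \<tau> \<partial>lborel) \<le> ennreal (C' * (\<nu> * T) powr (\<alpha> / 2))" .
  qed
qed

lemma partB:
  fixes u0 :: "real \<Rightarrow> real \<times> real \<Rightarrow> real \<times> real"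
    and u :: "real \<Rightarrow> (real \<times> real) \<times> real \<Rightarrow> real \<times> real"
    and om :: "real \<Rightarrow> (real \<times> real) \<times> real \<Rightarrow> real"
  assumes sol: "\<And>\<nu>. \<nu> > 0 \<Longrightarrow> NS_sol \<nu> (u0 \<nu>) (u \<nu>) (om \<nu>)"
    and C: "C > 0"
    and H: "\<forall>r. 0 < r \<and> r < 1/2 \<longrightarrow> (\<forall>x \<nu> t. \<nu> > 0 \<and> t > 0 \<longrightarrow>
            ball_mass (om \<nu>) t x r \<le> ennreal (C * \<bar>ln r\<bar> powr (-1/2)))"
  shows "(\<exists>C'>0. \<forall>\<nu> t. \<nu> > 0 \<and> t > 0 \<and> \<nu> * t < 1 \<longrightarrow>
          L2sq (om \<nu>) t \<le> ennreal (C' / (\<nu> * t * sqrt \<bar>ln (\<nu> * t)\<bar>))) \<and>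
      (\<exists>C''>0. \<forall>\<delta> \<nu> T. \<delta> > 0 \<and> \<nu> > 0 \<and> T > \<delta> \<and> \<nu> * T < 1 \<longrightarrow>
          ennreal \<nu> * (\<integral>\<^sup>+ \<tau>\<in>{\<delta><..<T}. L2sq (om \<nu>) \<tau> \<partial>lborel)
            \<le> ennreal (C'' * ln (T / \<delta>) / sqrt \<bar>ln (\<nu> * T)\<bar>))"
proof -
  define B where "B = (\<lambda>r::real. C * \<bar>ln r\<bar> powr (-1/2))"
  have B3: "B (1/3) > 0" unfolding B_def using C by (simp add: ln_div)
  define K where "K = 4 * C * (9 * B (1/3))"
  have K: "K > 0" unfolding K_def using C B3 by simp
  have Br: "B r = C / sqrt (- ln r)" if "0 < r" "r < 1" for r
  proof -
    have "\<bar>ln r\<bar> = - ln r" using that by simp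
    moreover have "(- ln r) powr (-1/2) = 1 / sqrt (- ln r)"
      using that by (simp add: powr_minus_divide powr_half_sqrt[symmetric])
    ultimately show ?thesis unfolding B_def by simp
  qed
  have ODE: "cb K > 0 \<and> (\<forall>t>0. \<nu> * t < 1 \<longrightarrow>
      integral (cbox (0,0) (1,1)) (\<lambda>x. (om \<nu> (x,t))\<^sup>2) \<le> cb K / (\<nu> * t * sqrt (- ln (\<nu> * t))))"
    if \<nu>: "\<nu> > 0" for \<nu>
  proof (rule ode_b[OF \<nu> K])
    note S = sol[OF \<nu>]
    show "\<And>s. s > 0 \<Longrightarrow> ((\<lambda>s. integral (cbox (0,0) (1,1)) (\<lambda>x. (om \<nu> (x,s))\<^sup>2)) has_real_derivative
      - 2 * \<nu> * integral (cbox (0,0) (1,1)) (\<lambda>x. (dds [((1,0),0)] (om \<nu>) (x,s))\<^sup>2 + (dds [((0,1),0)] (om \<nu>) (x,s))\<^sup>2)) (at s)"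
      by (rule NS_energy[OF S])
    show "\<And>s. s > 0 \<Longrightarrow> 0 \<le> integral (cbox (0,0) (1,1)) (\<lambda>x. (dds [((1,0),0)] (om \<nu>) (x,s))\<^sup>2 + (dds [((0,1),0)] (om \<nu>) (x,s))\<^sup>2)"
      by (rule NS_basic(2)[OF S])
    fix s r :: real assume s: "s > 0" and r: "0 < r" "r < 1/2"
    have "integral (cbox (0,0) (1,1)) (\<lambda>x. (om \<nu> (x,s))\<^sup>2)
     \<le> 4 * B r * (9 * B (1/3)) / r\<^sup>2
       + 2 * r\<^sup>2 * integral (cbox (0,0) (1,1)) (\<lambda>x. (dds [((1,0),0)] (om \<nu>) (x,s))\<^sup>2 + (dds [((0,1),0)] (om \<nu>) (x,s))\<^sup>2)"
    proof (rule NS_key[OF S s, where B=B])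
      show "\<And>r x. 0 < r \<Longrightarrow> r < 1/2 \<Longrightarrow> ball_mass (om \<nu>) s x r \<le> ennreal (B r)"
        using H \<nu> s unfolding B_def by blast
      show "\<And>r. 0 < r \<Longrightarrow> r < 1/2 \<Longrightarrow> 0 \<le> B r" using C unfolding B_def by simp
    qed (use r in auto)
    moreover have "4 * B r * (9 * B (1/3)) / r\<^sup>2 = K / (r\<^sup>2 * sqrt (- ln r))"
      unfolding K_def using Br[of r] r by simp
    ultimately show "integral (cbox (0,0) (1,1)) (\<lambda>x. (om \<nu> (x,s))\<^sup>2)
     \<le> K / (r\<^sup>2 * sqrt (- ln r)) + 2 * r\<^sup>2 * integral (cbox (0,0) (1,1)) (\<lambda>x. (dds [((1,0),0)] (om \<nu>) (x,s))\<^sup>2 + (dds [((0,1),0)] (om \<nu>) (x,s))\<^sup>2)"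
      by simp
  qed
  define ck where "ck = cb K"
  have ck: "ck > 0" using ODE[of 1] unfolding ck_def by simp
  have bound: "L2sq (om \<nu>) \<tau> \<le> ennreal (ck / (\<nu> * \<tau> * sqrt (- ln (\<nu> * \<tau>))))"
    if "\<nu> > 0" "\<tau> > 0" "\<nu> * \<tau> < 1" for \<nu> \<tau>
    using ODE[OF that(1)] NS_basic(3)[OF sol[OF that(1)] that(2)] that unfolding ck_def by simp
  show ?thesis
  proof (intro conjI exI[of _ ck] allI impI ck)
    fix \<nu> t :: real assume A: "\<nu> > 0 \<and> t > 0 \<and> \<nu> * t < 1"
    have "\<bar>ln (\<nu> * t)\<bar> = - ln (\<nu> * t)" using A by (simp add: mult_pos_pos)
    thus "L2sq (om \<nu>) t \<le> ennreal (ck / (\<nu> * t * sqrt \<bar>ln (\<nu> * t)\<bar>))"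
      using bound A by simp
  next
    fix \<delta> \<nu> T :: real assume A: "\<delta> > 0 \<and> \<nu> > 0 \<and> T > \<delta> \<and> \<nu> * T < 1"
    hence \<delta>: "\<delta> > 0" and \<nu>: "\<nu> > 0" and T: "T > \<delta>" and nT: "\<nu> * T < 1" by auto
    have nT0: "\<nu> * T > 0" using \<nu> \<delta> T by simp
    have lT: "- ln (\<nu> * T) > 0" using nT nT0 by simp
    define c where "c = ck / (\<nu> * sqrt (- ln (\<nu> * T)))"
    have c0: "c \<ge> 0" unfolding c_def using ck \<nu> lT by simp
    have "(\<integral>\<^sup>+ \<tau>\<in>{\<delta><..<T}. L2sq (om \<nu>) \<tau> \<partial>lborel) \<le> (\<integral>\<^sup>+ \<tau>\<in>{\<delta><..<T}. ennreal (c * (1 / \<tau>)) \<partial>lborel)"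
    proof (intro nn_integral_mono)
      fix \<tau>
      show "L2sq (om \<nu>) \<tau> * indicator {\<delta><..<T} \<tau> \<le> ennreal (c * (1 / \<tau>)) * indicator {\<delta><..<T} \<tau>"
      proof (cases "\<tau> \<in> {\<delta><..<T}")
        case True
        hence \<tau>: "\<tau> > 0" "\<tau> < T" using \<delta> by auto
        have nt0: "\<nu> * \<tau> > 0" using \<nu> \<tau> by simp
        have ntT: "\<nu> * \<tau> < \<nu> * T" using \<nu> \<tau> by simp
        hence nt1: "\<nu> * \<tau> < 1" using nT by simp
        have "ln (\<nu> * \<tau>) < ln (\<nu> * T)" using ntT nt0 by simp
        hence sq: "sqrt (- ln (\<nu> * T)) \<le> sqrt (- ln (\<nu> * \<tau>))" by simp
        have "ck / (\<nu> * \<tau> * sqrt (- ln (\<nu> * \<tau>))) \<le> ck / (\<nu> * \<tau> * sqrt (- ln (\<nu> * T)))"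
          using ck nt0 lT sq \<nu> \<tau> nt1 by (intro divide_left_mono mult_left_mono mult_pos_pos) auto
        also have "\<dots> = c * (1 / \<tau>)" unfolding c_def using \<tau> \<nu> by simp
        finally have "ennreal (ck / (\<nu> * \<tau> * sqrt (- ln (\<nu> * \<tau>)))) \<le> ennreal (c * (1 / \<tau>))"
          by (rule ennreal_leI)
        thus ?thesis using bound[OF \<nu> \<tau>(1) nt1] True by simp
      qed simp
    qed
    also have "\<dots> \<le> ennreal (c * (ln T - ln \<delta>))"
      by (rule nn_inv_int[OF \<delta> T c0])
    finally have "ennreal \<nu> * (\<integral>\<^sup>+ \<tau>\<in>{\<delta><..<T}. L2sq (om \<nu>) \<tau> \<partial>lborel) \<le> ennreal \<nu> * ennreal (c * (ln T - ln \<delta>))"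
      by (intro mult_left_mono) auto
    also have "\<dots> = ennreal (\<nu> * (c * (ln T - ln \<delta>)))"
      by (rule ennreal_mult'[symmetric]) (use \<nu> in simp)
    also have "\<nu> * (c * (ln T - ln \<delta>)) = ck * ln (T / \<delta>) / sqrt \<bar>ln (\<nu> * T)\<bar>"
    proof -
      have "\<bar>ln (\<nu> * T)\<bar> = - ln (\<nu> * T)" using lT by simp
      moreover have "ln (T / \<delta>) = ln T - ln \<delta>" using \<delta> T by (simp add: ln_div)
      ultimately show ?thesis unfolding c_def using \<nu> by simp
    qed
    finally show "ennreal \<nu> * (\<integral>\<^sup>+ \<tau>\<in>{\<delta><..<T}. L2sq (om \<nu>) \<tau> \<partial>lborel)
            \<le> ennreal (ck * ln (T / \<delta>) / sqrt \<bar>ln (\<nu> * T)\<bar>)" .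
  qed
qed

theorem theorem1p1:
  fixes u0 :: "real \<Rightarrow> real \<times> real \<Rightarrow> real \<times> real"
    and u :: "real \<Rightarrow> (real \<times> real) \<times> real \<Rightarrow> real \<times> real"
    and om :: "real \<Rightarrow> (real \<times> real) \<times> real \<Rightarrow> real"
  assumes init: "\<And>\<nu>. \<nu> > 0 \<Longrightarrow> L2_divfree (u0 \<nu>)"
    and bounded: "\<exists>K. \<forall>\<nu>>0. vort_TV_le (u0 \<nu>) K"
    and sol: "\<And>\<nu>. \<nu> > 0 \<Longrightarrow> NS_sol \<nu> (u0 \<nu>) (u \<nu>) (om \<nu>)"
  shows
    "(\<forall>\<alpha> C. 0 < \<alpha> \<and> \<alpha> < 2 \<and> C > 0 \<and>
        (\<forall>r>0. \<forall>x \<nu> t. \<nu> > 0 \<and> t > 0 \<longrightarrow>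
            ball_mass (om \<nu>) t x r \<le> ennreal (C * r powr \<alpha>)) \<longrightarrow>
      (\<exists>C'>0. \<forall>\<nu> t T. \<nu> > 0 \<and> t > 0 \<and> T > 0 \<and> \<nu> * t < 1 \<and> \<nu> * T < 1 \<longrightarrow>
          L2sq (om \<nu>) t \<le> ennreal (C' / (\<nu> * t) powr ((2 - \<alpha>) / 2)) \<and>
          ennreal \<nu> * (\<integral>\<^sup>+ \<tau>\<in>{0<..<T}. L2sq (om \<nu>) \<tau> \<partial>lborel)
            \<le> ennreal (C' * (\<nu> * T) powr (\<alpha> / 2))))
   \<and>
    (\<forall>C. C > 0 \<and>
        (\<forall>r. 0 < r \<and> r < 1/2 \<longrightarrow> (\<forall>x \<nu> t. \<nu> > 0 \<and> t > 0 \<longrightarrow>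
            ball_mass (om \<nu>) t x r \<le> ennreal (C * \<bar>ln r\<bar> powr (-1/2)))) \<longrightarrow>
      (\<exists>C'>0. \<forall>\<nu> t. \<nu> > 0 \<and> t > 0 \<and> \<nu> * t < 1 \<longrightarrow>
          L2sq (om \<nu>) t \<le> ennreal (C' / (\<nu> * t * sqrt \<bar>ln (\<nu> * t)\<bar>))) \<and>
      (\<exists>C''>0. \<forall>\<delta> \<nu> T. \<delta> > 0 \<and> \<nu> > 0 \<and> T > \<delta> \<and> \<nu> * T < 1 \<longrightarrow>
          ennreal \<nu> * (\<integral>\<^sup>+ \<tau>\<in>{\<delta><..<T}. L2sq (om \<nu>) \<tau> \<partial>lborel)
            \<le> ennreal (C'' * ln (T / \<delta>) / sqrt \<bar>ln (\<nu> * T)\<bar>)))"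
proof (rule conjI)
  show "\<forall>\<alpha> C. 0 < \<alpha> \<and> \<alpha> < 2 \<and> C > 0 \<and>
        (\<forall>r>0. \<forall>x \<nu> t. \<nu> > 0 \<and> t > 0 \<longrightarrow>
            ball_mass (om \<nu>) t x r \<le> ennreal (C * r powr \<alpha>)) \<longrightarrow>
      (\<exists>C'>0. \<forall>\<nu> t T. \<nu> > 0 \<and> t > 0 \<and> T > 0 \<and> \<nu> * t < 1 \<and> \<nu> * T < 1 \<longrightarrow>
          L2sq (om \<nu>) t \<le> ennreal (C' / (\<nu> * t) powr ((2 - \<alpha>) / 2)) \<and>
          ennreal \<nu> * (\<integral>\<^sup>+ \<tau>\<in>{0<..<T}. L2sq (om \<nu>) \<tau> \<partial>lborel)
            \<le> ennreal (C' * (\<nu> * T) powr (\<alpha> / 2)))"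
  proof (intro allI impI)
    fix \<alpha> C :: real
    assume h: "0 < \<alpha> \<and> \<alpha> < 2 \<and> C > 0 \<and>
        (\<forall>r>0. \<forall>x \<nu> t. \<nu> > 0 \<and> t > 0 \<longrightarrow>
            ball_mass (om \<nu>) t x r \<le> ennreal (C * r powr \<alpha>))"
    show "\<exists>C'>0. \<forall>\<nu> t T. \<nu> > 0 \<and> t > 0 \<and> T > 0 \<and> \<nu> * t < 1 \<and> \<nu> * T < 1 \<longrightarrow>
          L2sq (om \<nu>) t \<le> ennreal (C' / (\<nu> * t) powr ((2 - \<alpha>) / 2)) \<and>
          ennreal \<nu> * (\<integral>\<^sup>+ \<tau>\<in>{0<..<T}. L2sq (om \<nu>) \<tau> \<partial>lborel)
            \<le> ennreal (C' * (\<nu> * T) powr (\<alpha> / 2))"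
      by (rule partA[OF sol, where \<alpha>=\<alpha> and C=C]) (use h in auto)
  qed
next
  show "\<forall>C. C > 0 \<and>
        (\<forall>r. 0 < r \<and> r < 1/2 \<longrightarrow> (\<forall>x \<nu> t. \<nu> > 0 \<and> t > 0 \<longrightarrow>
            ball_mass (om \<nu>) t x r \<le> ennreal (C * \<bar>ln r\<bar> powr (-1/2)))) \<longrightarrow>
      (\<exists>C'>0. \<forall>\<nu> t. \<nu> > 0 \<and> t > 0 \<and> \<nu> * t < 1 \<longrightarrow>
          L2sq (om \<nu>) t \<le> ennreal (C' / (\<nu> * t * sqrt \<bar>ln (\<nu> * t)\<bar>))) \<and>
      (\<exists>C''>0. \<forall>\<delta> \<nu> T. \<delta> > 0 \<and> \<nu> > 0 \<and> T > \<delta> \<and> \<nu> * T < 1 \<longrightarrow>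
          ennreal \<nu> * (\<integral>\<^sup>+ \<tau>\<in>{\<delta><..<T}. L2sq (om \<nu>) \<tau> \<partial>lborel)
            \<le> ennreal (C'' * ln (T / \<delta>) / sqrt \<bar>ln (\<nu> * T)\<bar>))"
  proof (intro allI impI)
    fix C :: real
    assume h: "C > 0 \<and>
        (\<forall>r. 0 < r \<and> r < 1/2 \<longrightarrow> (\<forall>x \<nu> t. \<nu> > 0 \<and> t > 0 \<longrightarrow>
            ball_mass (om \<nu>) t x r \<le> ennreal (C * \<bar>ln r\<bar> powr (-1/2))))"
    show "(\<exists>C'>0. \<forall>\<nu> t. \<nu> > 0 \<and> t > 0 \<and> \<nu> * t < 1 \<longrightarrow>
          L2sq (om \<nu>) t \<le> ennreal (C' / (\<nu> * t * sqrt \<bar>ln (\<nu> * t)\<bar>))) \<and>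
      (\<exists>C''>0. \<forall>\<delta> \<nu> T. \<delta> > 0 \<and> \<nu> > 0 \<and> T > \<delta> \<and> \<nu> * T < 1 \<longrightarrow>
          ennreal \<nu> * (\<integral>\<^sup>+ \<tau>\<in>{\<delta><..<T}. L2sq (om \<nu>) \<tau> \<partial>lborel)
            \<le> ennreal (C'' * ln (T / \<delta>) / sqrt \<bar>ln (\<nu> * T)\<bar>))"
      by (rule partB[OF sol, where C=C]) (use h in auto)
  qed
qed

end
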